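(* Let $G$ be a nilpotent Lie group with a left-invariant almost parahermitian structure whose intrinsic torsion lies in $W_4+W_8$, i.e. the almost paracomplex structure $K$ is integrable and $dF=\theta\wedge F$ for some one-form $\theta$. If the metric is Einstein, then the structure is parak\"ahler (hence, its metric is Ricci-flat).
   Context: An almost parahermitian structure on a $2n$-manifold is a splitting $TM=V\oplus H$ into rank-$n$ distributions together with a pseudoriemannian metric $g$ such that $g(KX,KY)=-g(X,Y)$ where $K=\mathrm{id}_V-\mathrm{id}_H$; its fundamental form is $F(X,Y)=g(KX,Y)$. $K$ is integrable if $V$ and $H$ are integrable distributions. The structure is parak\"ahler if $F$ is parallel for the Levi-Civita connection of $g$. The intrinsic torsion class $W_4+W_8$ (locally conformally parak\"ahler structures) is characterized by integrability of $K$ together with $dF=\theta\wedge F$ for a one-form $\theta$. Left-invariant means $V$, $H$, $g$ are invariant under left translations. *)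

theory Defs
  imports "HOL-Analysis.Analysis"
begin

text \<open>Everything is at the level of the Lie algebra: left-invariant vector fields
of the Lie group G are identified with vectors of a finite-dimensional real
vector space 'a (euclidean_space), the Lie bracket of left-invariant fields is br.
Left-invariant tensors are multilinear maps on 'a.\<close>

definition lie_algebra :: "('a::real_vector \<Rightarrow> 'a \<Rightarrow> 'a) \<Rightarrow> bool" where
  "lie_algebra br \<longleftrightarrow> bilinear br \<and> (\<forall>x. br x x = 0) \<and>
     (\<forall>x y z. br x (br y z) + br y (br z x) + br z (br x y) = 0)"

fun lower_central :: "('a::real_vector \<Rightarrow> 'a \<Rightarrow> 'a) \<Rightarrow> nat \<Rightarrow> 'a set" where
  "lower_central br 0 = UNIV"
| "lower_central br (Suc k) = span {br x y | x y. y \<in> lower_central br k}"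

definition nilpotent_lie_algebra :: "('a::real_vector \<Rightarrow> 'a \<Rightarrow> 'a) \<Rightarrow> bool" where
  "nilpotent_lie_algebra br \<longleftrightarrow> lie_algebra br \<and> (\<exists>k. lower_central br k = {0})"

definition paraK :: "'a::real_vector set \<Rightarrow> 'a set \<Rightarrow> 'a \<Rightarrow> 'a" where
  "paraK V H x = (THE y. \<exists>v\<in>V. \<exists>h\<in>H. x = v + h \<and> y = v - h)"

definition almost_parahermitian ::
  "'a::euclidean_space set \<Rightarrow> 'a set \<Rightarrow> ('a \<Rightarrow> 'a \<Rightarrow> real) \<Rightarrow> bool" where
  "almost_parahermitian V H g \<longleftrightarrow>
     subspace V \<and> subspace H \<and> V \<inter> H = {0} \<and> (\<forall>x. \<exists>v\<in>V. \<exists>h\<in>H. x = v + h) \<and>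
     dim V = dim H \<and>
     bilinear g \<and> (\<forall>x y. g x y = g y x) \<and> (\<forall>x. (\<forall>y. g x y = 0) \<longrightarrow> x = 0) \<and>
     (\<forall>x y. g (paraK V H x) (paraK V H y) = - g x y)"

definition fundamental_form ::
  "'a::real_vector set \<Rightarrow> 'a set \<Rightarrow> ('a \<Rightarrow> 'a \<Rightarrow> real) \<Rightarrow> 'a \<Rightarrow> 'a \<Rightarrow> real" where
  "fundamental_form V H g X Y = g (paraK V H X) Y"

text \<open>Integrability of K: left-invariant distributions V, H are integrable iff subalgebras.\<close>
definition paraK_integrable :: "('a::real_vector \<Rightarrow> 'a \<Rightarrow> 'a) \<Rightarrow> 'a set \<Rightarrow> 'a set \<Rightarrow> bool" where
  "paraK_integrable br V H \<longleftrightarrow>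
     (\<forall>x\<in>V. \<forall>y\<in>V. br x y \<in> V) \<and> (\<forall>x\<in>H. \<forall>y\<in>H. br x y \<in> H)"

definition d2 :: "('a::real_vector \<Rightarrow> 'a \<Rightarrow> 'a) \<Rightarrow> ('a \<Rightarrow> 'a \<Rightarrow> real) \<Rightarrow> 'a \<Rightarrow> 'a \<Rightarrow> 'a \<Rightarrow> real" where
  "d2 br \<omega> X Y Z = - \<omega> (br X Y) Z + \<omega> (br X Z) Y - \<omega> (br Y Z) X"

definition wedge12 :: "('a::real_vector \<Rightarrow> real) \<Rightarrow> ('a \<Rightarrow> 'a \<Rightarrow> real) \<Rightarrow> 'a \<Rightarrow> 'a \<Rightarrow> 'a \<Rightarrow> real" where
  "wedge12 \<theta> \<omega> X Y Z = \<theta> X * \<omega> Y Z - \<theta> Y * \<omega> X Z + \<theta> Z * \<omega> X Y"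

definition torsion_W4_W8 ::
  "('a::euclidean_space \<Rightarrow> 'a \<Rightarrow> 'a) \<Rightarrow> 'a set \<Rightarrow> 'a set \<Rightarrow> ('a \<Rightarrow> 'a \<Rightarrow> real) \<Rightarrow> bool" where
  "torsion_W4_W8 br V H g \<longleftrightarrow> paraK_integrable br V H \<and>
     (\<exists>\<theta>. linear \<theta> \<and> (\<forall>X Y Z. d2 br (fundamental_form V H g) X Y Z
                                   = wedge12 \<theta> (fundamental_form V H g) X Y Z))"

text \<open>Levi-Civita connection on left-invariant fields (Koszul formula).\<close>
definition levi_civita :: "('a::real_vector \<Rightarrow> 'a \<Rightarrow> 'a) \<Rightarrow> ('a \<Rightarrow> 'a \<Rightarrow> real) \<Rightarrow> 'a \<Rightarrow> 'a \<Rightarrow> 'a" where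
  "levi_civita br g X Y =
     (THE W. \<forall>Z. 2 * g W Z = g (br X Y) Z - g (br Y Z) X + g (br Z X) Y)"

definition curvature :: "('a::real_vector \<Rightarrow> 'a \<Rightarrow> 'a) \<Rightarrow> ('a \<Rightarrow> 'a \<Rightarrow> real) \<Rightarrow> 'a \<Rightarrow> 'a \<Rightarrow> 'a \<Rightarrow> 'a" where
  "curvature br g X Y Z =
     levi_civita br g X (levi_civita br g Y Z) - levi_civita br g Y (levi_civita br g X Z)
     - levi_civita br g (br X Y) Z"

definition ricci :: "('a::euclidean_space \<Rightarrow> 'a \<Rightarrow> 'a) \<Rightarrow> ('a \<Rightarrow> 'a \<Rightarrow> real) \<Rightarrow> 'a \<Rightarrow> 'a \<Rightarrow> real" where
  "ricci br g Y Z = (\<Sum>b\<in>Basis. curvature br g b Y Z \<bullet> b)"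

definition einstein :: "('a::euclidean_space \<Rightarrow> 'a \<Rightarrow> 'a) \<Rightarrow> ('a \<Rightarrow> 'a \<Rightarrow> real) \<Rightarrow> bool" where
  "einstein br g \<longleftrightarrow> (\<exists>c::real. \<forall>Y Z. ricci br g Y Z = c * g Y Z)"

text \<open>Covariant derivative of F (the term X(F(Y,Z)) vanishes for left-invariant data).\<close>
definition nabla_F ::
  "('a::real_vector \<Rightarrow> 'a \<Rightarrow> 'a) \<Rightarrow> 'a set \<Rightarrow> 'a set \<Rightarrow> ('a \<Rightarrow> 'a \<Rightarrow> real) \<Rightarrow> 'a \<Rightarrow> 'a \<Rightarrow> 'a \<Rightarrow> real" where
  "nabla_F br V H g X Y Z =
     - fundamental_form V H g (levi_civita br g X Y) Z
     - fundamental_form V H g Y (levi_civita br g X Z)"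

definition parakahler ::
  "('a::real_vector \<Rightarrow> 'a \<Rightarrow> 'a) \<Rightarrow> 'a set \<Rightarrow> 'a set \<Rightarrow> ('a \<Rightarrow> 'a \<Rightarrow> real) \<Rightarrow> bool" where
  "parakahler br V H g \<longleftrightarrow> (\<forall>X Y Z. nabla_F br V H g X Y Z = 0)"

end

theory Submission
  imports Defs
begin


lemma trace_expand:
  fixes M :: "'a::euclidean_space \<Rightarrow> 'a"
  assumes I: "finite I" and M: "linear M" and phi: "\<And>i. i \<in> I \<Longrightarrow> linear (\<phi> i)"
    and ex: "\<And>x. x = (\<Sum>i\<in>I. \<phi> i x *\<^sub>R e i)"
  shows "(\<Sum>b\<in>Basis. M b \<bullet> b) = (\<Sum>i\<in>I. \<phi> i (M (e i)))"
proof -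
  have "(\<Sum>b\<in>Basis. M b \<bullet> b) = (\<Sum>b\<in>Basis. (\<Sum>i\<in>I. \<phi> i (M b) *\<^sub>R e i) \<bullet> b)"
    by (subst ex) simp
  also have "\<dots> = (\<Sum>i\<in>I. \<Sum>b\<in>Basis. \<phi> i (M b) * (e i \<bullet> b))"
    by (simp add: inner_sum_left sum.swap[of _ Basis])
  also have "\<dots> = (\<Sum>i\<in>I. \<phi> i (M (\<Sum>b\<in>Basis. (e i \<bullet> b) *\<^sub>R b)))"
  proof (rule sum.cong[OF refl])
    fix i assume i: "i \<in> I"
    have L: "linear (\<lambda>x. \<phi> i (M x))" using linear_compose[OF M phi[OF i]] by (simp add: o_def)
    show "(\<Sum>b\<in>Basis. \<phi> i (M b) * (e i \<bullet> b)) = \<phi> i (M (\<Sum>b\<in>Basis. (e i \<bullet> b) *\<^sub>R b))"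
      by (simp add: linear_sum[OF L] linear_cmul[OF L] mult.commute)
  qed
  also have "\<dots> = (\<Sum>i\<in>I. \<phi> i (M (e i)))"
    by (simp add: euclidean_representation)
  finally show ?thesis .
qed

lemma orth_expand:
  fixes W :: "'a::euclidean_space set"
  assumes W: "finite W" "pairwise orthogonal W" "span W = UNIV"
  shows "x = (\<Sum>u\<in>W. ((x \<bullet> u) / (u \<bullet> u)) *\<^sub>R u)"
proof -
  define z where "z = x - (\<Sum>u\<in>W. ((x \<bullet> u) / (u \<bullet> u)) *\<^sub>R u)"
  have zu: "z \<bullet> u = 0" if u: "u \<in> W" for u
  proof -
    have "(\<Sum>u'\<in>W. ((x \<bullet> u') / (u' \<bullet> u')) *\<^sub>R u') \<bullet> u = (\<Sum>u'\<in>W. ((x \<bullet> u') / (u' \<bullet> u')) * (u' \<bullet> u))"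
      by (simp add: inner_sum_left)
    also have "\<dots> = ((x \<bullet> u) / (u \<bullet> u)) * (u \<bullet> u)"
      using W(2) u by (subst sum.remove[OF W(1) u]) (auto intro!: sum.neutral simp: pairwise_def orthogonal_def inner_commute)
    also have "\<dots> = x \<bullet> u" by (cases "u = 0") auto
    finally show ?thesis by (simp add: z_def inner_diff_left)
  qed
  have "z \<bullet> y = 0" if "y \<in> span W" for y
    using that
  proof (induction rule: span_induct)
    case base show ?case by (auto simp: subspace_def inner_add_right)
  next
    case (step x) then show ?case using zu by simp
  qed
  then have "z \<bullet> z = 0" using W(3) by auto
  then show ?thesis by (simp add: z_def)
qed

lemma nil_flag:
  fixes N :: "'a::euclidean_space \<Rightarrow> 'a"
  assumes N: "linear N" and nil: "\<And>x. (N ^^ k) x = 0"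
  shows "subspace S \<Longrightarrow> N ` S \<subseteq> S \<Longrightarrow>
    \<exists>W. finite W \<and> pairwise orthogonal W \<and> span W = S \<and> (\<forall>u\<in>W. N u \<bullet> u = 0)"
proof (induction "dim S" arbitrary: S rule: less_induct)
  case less
  show ?case
  proof (cases "N ` S = S")
    case True
    have "(N ^^ j) ` S = S" for j
    proof (induction j)
      case (Suc j)
      have "(N ^^ Suc j) ` S = N ` ((N ^^ j) ` S)" by (simp add: image_image)
      then show ?case using Suc True by simp
    qed simp
    then have "S = (N ^^ k) ` S" by simp
    also have "\<dots> \<subseteq> {0}" using nil by auto
    finally have "S \<subseteq> {0}" .
    then have "S = {0}" using subspace_0[OF \<open>subspace S\<close>] by auto
    then show ?thesis by (intro exI[of _ "{}"]) auto
  next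
    case False
    define S' where "S' = N ` S"
    have sub': "subspace S'" unfolding S'_def by (rule linear_subspace_image[OF N less.prems(1)])
    have SS: "S' \<subset> S" using False less.prems(2) unfolding S'_def by auto
    have dlt: "dim S' < dim S"
    proof -
      have "span S' = S'" "span S = S" using sub' less.prems(1) by (simp_all only: span_eq_iff)
      then have "span S' \<subset> span S" using SS by (simp del: span_eq_iff)
      then show ?thesis by (rule dim_psubset)
    qed
    have NS': "N ` S' \<subseteq> S'" unfolding S'_def using less.prems(2) by auto
    obtain W' where W': "finite W'" "pairwise orthogonal W'" "span W' = S'" "\<forall>u\<in>W'. N u \<bullet> u = 0"
      using less.hyps[OF dlt sub' NS'] by blast
    obtain B where B: "B \<subseteq> S" "independent B" "S \<subseteq> span B" "card B = dim S"
      using basis_exists[of S] by blast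
    have fB: "finite B" using B(2) independent_imp_finite by blast
    obtain U where U: "pairwise orthogonal (W' \<union> U)" "span (W' \<union> U) = span (W' \<union> B)"
      using orthogonal_extension_aux[OF fB W'(1) W'(2)] by blast
    have W'S: "W' \<subseteq> S" using W'(3) SS span_superset[of W'] by auto
    have spanS: "span (W' \<union> B) = S"
    proof
      show "span (W' \<union> B) \<subseteq> S" using W'S B(1) less.prems(1) by (intro span_minimal) auto
      show "S \<subseteq> span (W' \<union> B)" using B(3) span_mono[of B "W' \<union> B"] by auto
    qed
    have fU: "finite U" using pairwise_orthogonal_imp_finite[OF U(1)] by simp
    show ?thesis
    proof (intro exI[of _ "W' \<union> U"] conjI)
      show "finite (W' \<union> U)" using W'(1) fU by simp
      show "pairwise orthogonal (W' \<union> U)" by fact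
      show "span (W' \<union> U) = S" using U(2) spanS by simp
      show "\<forall>u\<in>W' \<union> U. N u \<bullet> u = 0"
      proof
        fix u assume u: "u \<in> W' \<union> U"
        show "N u \<bullet> u = 0"
        proof (cases "u \<in> W'")
          case True then show ?thesis using W'(4) by auto
        next
          case False
          then have uU: "u \<in> U" using u by auto
          have "u \<in> span (W' \<union> U)" using u span_superset by blast
          then have uS: "u \<in> S" using U(2) spanS by simp
          have "N u \<in> S'" unfolding S'_def using uS by auto
          then have "N u \<in> span W'" using W'(3) by simp
          moreover have "orthogonal u y" if "y \<in> W'" for y
          proof -
            have "u \<noteq> y" using False that by auto
            then show ?thesis using U(1) uU that unfolding pairwise_def by blast
          qed
          ultimately have "orthogonal u (N u)"
            by (rule orthogonal_to_span)
          then show ?thesis by (simp add: orthogonal_def inner_commute)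
        qed
      qed
    qed
  qed
qed

lemma nil_trace:
  fixes N :: "'a::euclidean_space \<Rightarrow> 'a"
  assumes N: "linear N" and nil: "\<And>x. (N ^^ k) x = 0"
  shows "(\<Sum>b\<in>Basis. N b \<bullet> b) = 0"
proof -
  obtain W where W: "finite W" "pairwise orthogonal W" "span W = UNIV" "\<forall>u\<in>W. N u \<bullet> u = 0"
    using nil_flag[OF N nil, of UNIV] by auto
  have lin: "linear (\<lambda>x. (x \<bullet> u) / (u \<bullet> u))" for u :: 'a
    by (intro linearI) (auto simp: inner_add_left add_divide_distrib)
  have "(\<Sum>b\<in>Basis. N b \<bullet> b) = (\<Sum>u\<in>W. (N u \<bullet> u) / (u \<bullet> u))"
    by (rule trace_expand[OF W(1) N lin, where e = "\<lambda>u. u"]) (rule orth_expand[OF W(1-3)])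
  also have "\<dots> = 0" using W(4) by simp
  finally show ?thesis .
qed




locale PH =
  fixes br :: "'a::euclidean_space \<Rightarrow> 'a \<Rightarrow> 'a" and V H :: "'a set"
    and g :: "'a \<Rightarrow> 'a \<Rightarrow> real" and \<theta> :: "'a \<Rightarrow> real" and ec :: real
  assumes br_bil: "bilinear br" and br_alt: "\<And>x. br x x = 0"
    and jacobi: "\<And>x y z. br x (br y z) + br y (br z x) + br z (br x y) = 0"
    and nilp: "\<exists>k. lower_central br k = {0}"
    and subV: "subspace V" and subH: "subspace H" and VH0: "V \<inter> H = {0}"
    and VHall: "\<And>x. \<exists>v\<in>V. \<exists>h\<in>H. x = v + h"
    and dimVH: "dim V = dim H"
    and g_bil: "bilinear g" and g_sym: "\<And>x y. g x y = g y x"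
    and g_nd: "\<And>x. (\<forall>y. g x y = 0) \<Longrightarrow> x = 0"
    and isoV: "\<And>v w. v \<in> V \<Longrightarrow> w \<in> V \<Longrightarrow> g v w = 0"
    and isoH: "\<And>v w. v \<in> H \<Longrightarrow> w \<in> H \<Longrightarrow> g v w = 0"
    and brV: "\<And>v w. v \<in> V \<Longrightarrow> w \<in> V \<Longrightarrow> br v w \<in> V"
    and brH: "\<And>v w. v \<in> H \<Longrightarrow> w \<in> H \<Longrightarrow> br v w \<in> H"
    and th_lin: "linear \<theta>"
    and rel1: "\<And>v w h. v \<in> V \<Longrightarrow> w \<in> V \<Longrightarrow> h \<in> H \<Longrightarrow>
        - g (br v w) h - g (br v h) w + g (br w h) v = \<theta> v * g w h - \<theta> w * g v h"
    and rel2: "\<And>v w h. v \<in> H \<Longrightarrow> w \<in> H \<Longrightarrow> h \<in> V \<Longrightarrow>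
        - g (br v w) h - g (br v h) w + g (br w h) v = \<theta> v * g w h - \<theta> w * g v h"
    and einst: "\<And>Y Z. ricci br g Y Z = ec * g Y Z"
begin

lemma swap: "PH br H V g \<theta> ec"
  using br_bil br_alt jacobi nilp subV subH VH0 VHall dimVH g_bil g_sym g_nd isoV isoH brV brH th_lin rel1 rel2 einst
  unfolding PH_def
proof (intro conjI allI impI)
  show "H \<inter> V = {0}" using VH0 by blast
  fix x show "\<exists>v\<in>H. \<exists>h\<in>V. x = v + h" using VHall[of x] by (metis add.commute)
qed (simp_all add: dimVH)

lemmas br_simps = bilinear_ladd[OF br_bil] bilinear_radd[OF br_bil] bilinear_lmul[OF br_bil]
  bilinear_rmul[OF br_bil] bilinear_lsub[OF br_bil] bilinear_rsub[OF br_bil]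
  bilinear_lneg[OF br_bil] bilinear_rneg[OF br_bil] bilinear_lzero[OF br_bil] bilinear_rzero[OF br_bil]

lemmas g_simps = bilinear_ladd[OF g_bil] bilinear_radd[OF g_bil] bilinear_lmul[OF g_bil]
  bilinear_rmul[OF g_bil] bilinear_lsub[OF g_bil] bilinear_rsub[OF g_bil]
  bilinear_lneg[OF g_bil] bilinear_rneg[OF g_bil] bilinear_lzero[OF g_bil] bilinear_rzero[OF g_bil]

lemmas th_simps = linear_add[OF th_lin] linear_diff[OF th_lin] linear_cmul[OF th_lin]
  linear_neg[OF th_lin] linear_0[OF th_lin]

lemma br_linR: "linear (br x)" and br_linL: "linear (\<lambda>y. br y x)"
  using br_bil unfolding bilinear_def by auto

lemma g_linR: "linear (g x)" and g_linL: "linear (\<lambda>y. g y x)"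
  using g_bil unfolding bilinear_def by auto

lemma br_sum_left: "br (sum f S) y = (\<Sum>x\<in>S. br (f x) y)"
  using linear_sum[OF br_linL[of y]] by simp
lemma br_sum_right: "br y (sum f S) = (\<Sum>x\<in>S. br y (f x))"
  using linear_sum[OF br_linR[of y]] by simp
lemma g_sum_left: "g (sum f S) y = (\<Sum>x\<in>S. g (f x) y)"
  using linear_sum[OF g_linL[of y]] by simp
lemma g_sum_right: "g y (sum f S) = (\<Sum>x\<in>S. g y (f x))"
  using linear_sum[OF g_linR[of y]] by simp
lemma th_sum: "\<theta> (sum f S) = (\<Sum>x\<in>S. \<theta> (f x))"
  using linear_sum[OF th_lin] by simp

lemma br_anti: "br y x = - br x y"
proof -
  have "0 = br (x + y) (x + y)" using br_alt by simp
  also have "\<dots> = br x y + br y x"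
    by (simp only: bilinear_ladd[OF br_bil] bilinear_radd[OF br_bil]) (simp add: br_alt)
  finally have "br x y + br y x = 0" by (rule sym)
  then show ?thesis by (simp only: add_eq_0_iff)
qed

lemma riesz:
  assumes phi: "linear \<phi>"
  shows "\<exists>w. \<forall>z. g w z = \<phi> z"
proof -
  define G where "G x = (\<Sum>b\<in>Basis. g x b *\<^sub>R b)" for x
  have linG: "linear G" unfolding G_def
    by (intro linearI) (simp_all add: g_simps scaleR_add_left sum.distrib scaleR_sum_right)
  have gexp: "g x y = (\<Sum>b\<in>Basis. (y \<bullet> b) * g x b)" for x y
  proof -
    have "g x y = g x (\<Sum>b\<in>Basis. (y \<bullet> b) *\<^sub>R b)" by (simp add: euclidean_representation)
    also have "\<dots> = (\<Sum>b\<in>Basis. (y \<bullet> b) * g x b)" by (simp add: g_sum_right g_simps)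
    finally show ?thesis .
  qed
  have Gb: "G x \<bullet> b = g x b" if "b \<in> Basis" for x b
    using that by (simp add: G_def inner_sum_left inner_Basis if_distrib cong: if_cong)
  have "inj G"
  proof (subst linear_inj_iff_eq_0[OF linG], intro allI impI)
    fix x assume "G x = 0"
    then have "g x b = 0" if "b \<in> Basis" for b
    proof -
      have "g x b = G x \<bullet> b" using Gb[OF that] by simp
      then show ?thesis using \<open>G x = 0\<close> by simp
    qed
    then have "g x y = 0" for y by (subst gexp) simp
    then show "x = 0" using g_nd by blast
  qed
  then have "surj G" by (rule linear_injective_imp_surjective[OF linG]) simp
  then obtain w where w: "G w = (\<Sum>b\<in>Basis. \<phi> b *\<^sub>R b)" by (metis surjD)
  have "g w b = \<phi> b" if "b \<in> Basis" for b
    using Gb[OF that, of w] that by (simp add: w inner_sum_left inner_Basis if_distrib cong: if_cong)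
  then have "g w z = \<phi> z" for z
  proof -
    have "\<phi> z = \<phi> (\<Sum>b\<in>Basis. (z \<bullet> b) *\<^sub>R b)" by (simp add: euclidean_representation)
    also have "\<dots> = (\<Sum>b\<in>Basis. (z \<bullet> b) * \<phi> b)" by (simp add: linear_sum[OF phi] linear_cmul[OF phi])
    finally show ?thesis by (subst gexp) (simp add: \<open>\<And>b. b \<in> Basis \<Longrightarrow> g w b = \<phi> b\<close>)
  qed
  then show ?thesis by blast
qed

abbreviation nb where "nb X Y \<equiv> levi_civita br g X Y"
abbreviation Rc where "Rc X Y Z \<equiv> curvature br g X Y Z"

lemma g_eq0: "(\<And>z. g x z = 0) \<Longrightarrow> x = 0"
  using g_nd by blast

lemma lc_unique: "(\<And>Z. 2 * g W Z = g (br X Y) Z - g (br Y Z) X + g (br Z X) Y) \<Longrightarrow>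
  (\<And>Z. 2 * g W' Z = g (br X Y) Z - g (br Y Z) X + g (br Z X) Y) \<Longrightarrow> W = W'"
proof -
  assume a: "\<And>Z. 2 * g W Z = g (br X Y) Z - g (br Y Z) X + g (br Z X) Y"
    and b: "\<And>Z. 2 * g W' Z = g (br X Y) Z - g (br Y Z) X + g (br Z X) Y"
  have "g (W - W') z = 0" for z using a[of z] b[of z] by (simp add: g_simps)
  then have "W - W' = 0" by (rule g_eq0)
  then show "W = W'" by simp
qed

lemma lc: "2 * g (nb X Y) Z = g (br X Y) Z - g (br Y Z) X + g (br Z X) Y"
proof -
  have lin: "linear (\<lambda>Z. (g (br X Y) Z - g (br Y Z) X + g (br Z X) Y) / 2)"
    by (intro linearI) (simp_all add: g_simps br_simps add_divide_distrib diff_divide_distrib algebra_simps)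
  obtain w where w: "\<And>Z. g w Z = (g (br X Y) Z - g (br Y Z) X + g (br Z X) Y) / 2"
    using riesz[OF lin] by blast
  have w2: "\<And>Z. 2 * g w Z = g (br X Y) Z - g (br Y Z) X + g (br Z X) Y" by (simp add: w)
  have "levi_civita br g X Y = w"
    unfolding levi_civita_def
  proof (rule the_equality)
    show "\<forall>Z. 2 * g w Z = g (br X Y) Z - g (br Y Z) X + g (br Z X) Y" using w2 by blast
    fix W assume "\<forall>Z. 2 * g W Z = g (br X Y) Z - g (br Y Z) X + g (br Z X) Y"
    then show "W = w" using lc_unique[of W X Y w] w2 by blast
  qed
  then show ?thesis using w2 by simp
qed

lemma lc_eqI: "(\<And>Z. 2 * g W Z = g (br X Y) Z - g (br Y Z) X + g (br Z X) Y) \<Longrightarrow> nb X Y = W"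
  using lc_unique[OF lc] by blast

lemma nb_addL: "nb (X + X') Y = nb X Y + nb X' Y"
  by (rule lc_eqI) (simp only: g_simps real_scaleR_def distrib_left mult.left_commute[of 2] lc, simp add: g_simps br_simps algebra_simps)
lemma nb_scaleL: "nb (a *\<^sub>R X) Y = a *\<^sub>R nb X Y"
  by (rule lc_eqI) (simp only: g_simps real_scaleR_def distrib_left mult.left_commute[of 2] lc, simp add: g_simps br_simps algebra_simps)
lemma nb_addR: "nb X (Y + Y') = nb X Y + nb X Y'"
  by (rule lc_eqI) (simp only: g_simps real_scaleR_def distrib_left mult.left_commute[of 2] lc, simp add: g_simps br_simps algebra_simps)
lemma nb_scaleR: "nb X (a *\<^sub>R Y) = a *\<^sub>R nb X Y"
  by (rule lc_eqI) (simp only: g_simps real_scaleR_def distrib_left mult.left_commute[of 2] lc, simp add: g_simps br_simps algebra_simps)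

lemma nb_bil: "bilinear nb"
  unfolding bilinear_def
  by (auto intro!: linearI simp: nb_addL nb_scaleL nb_addR nb_scaleR)

lemmas nb_simps = bilinear_ladd[OF nb_bil] bilinear_radd[OF nb_bil] bilinear_lmul[OF nb_bil]
  bilinear_rmul[OF nb_bil] bilinear_lsub[OF nb_bil] bilinear_rsub[OF nb_bil]
  bilinear_lneg[OF nb_bil] bilinear_rneg[OF nb_bil] bilinear_lzero[OF nb_bil] bilinear_rzero[OF nb_bil]

lemma nb_linL: "linear (\<lambda>X. nb X Y)" and nb_linR: "linear (nb X)"
  using nb_bil unfolding bilinear_def by auto

lemma nb_sum_left: "nb (sum f S) y = (\<Sum>x\<in>S. nb (f x) y)"
  using linear_sum[OF nb_linL[of y]] by simp

lemma metric: "g (nb X A) B + g A (nb X B) = 0"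
proof -
  have "2 * g (nb X A) B + 2 * g (nb X B) A = 0"
    unfolding lc by (simp add: br_anti[of A X] br_anti[of B A] br_anti[of X B] g_simps)
  then show ?thesis using g_sym[of A "nb X B"] by simp
qed

lemma torsion: "nb X Y - nb Y X = br X Y"
proof -
  have "g (nb X Y - nb Y X - br X Y) Z = 0" for Z
  proof -
    have "2 * g (nb X Y) Z - 2 * g (nb Y X) Z - 2 * g (br X Y) Z = 0"
      unfolding lc by (simp add: br_anti[of Y X] br_anti[of X Z] br_anti[of Z Y] g_simps)
    then show ?thesis by (simp add: g_simps)
  qed
  then show ?thesis using g_eq0 by (metis eq_iff_diff_eq_0)
qed

lemma Rc_def': "Rc X Y Z = nb X (nb Y Z) - nb Y (nb X Z) - nb (br X Y) Z"
  by (simp add: curvature_def)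

lemma Rg: "g (Rc X Y Z) W = - g (nb Y Z) (nb X W) + g (nb X Z) (nb Y W) - g (nb (br X Y) Z) W"
proof -
  have 1: "g (nb X (nb Y Z)) W = - g (nb Y Z) (nb X W)" using metric[of X "nb Y Z" W] by simp
  have 2: "g (nb Y (nb X Z)) W = - g (nb X Z) (nb Y W)" using metric[of Y "nb X Z" W] by simp
  show ?thesis unfolding Rc_def' by (simp add: g_simps 1 2)
qed

lemma Rc_linL: "linear (\<lambda>X. Rc X Y Z)"
  unfolding curvature_def
  by (intro linearI) (simp_all add: nb_simps br_simps algebra_simps)

lemma Rc_skew: "g (Rc X Y A) B = - g A (Rc X Y B)"
proof -
  have "g (Rc X Y A) B + g (Rc X Y B) A = 0"
    unfolding Rg using metric[of "br X Y" A B] g_sym[of "nb Y A" "nb X B"] g_sym[of "nb X A" "nb Y B"]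
      g_sym[of A "nb (br X Y) B"] by simp
  then show ?thesis using g_sym[of A "Rc X Y B"] by simp
qed

lemma bianchi: "Rc X Y Z + Rc Y Z X + Rc Z X Y = 0"
proof -
  have t1: "nb Y Z - nb Z Y = br Y Z" "nb Z X - nb X Z = br Z X" "nb X Y - nb Y X = br X Y"
    using torsion by auto
  have "Rc X Y Z + Rc Y Z X + Rc Z X Y =
     nb X (nb Y Z - nb Z Y) + nb Y (nb Z X - nb X Z) + nb Z (nb X Y - nb Y X)
     - nb (br X Y) Z - nb (br Y Z) X - nb (br Z X) Y"
    unfolding Rc_def' by (simp add: nb_simps algebra_simps)
  also have "\<dots> = (nb X (br Y Z) - nb (br Y Z) X) + (nb Y (br Z X) - nb (br Z X) Y) + (nb Z (br X Y) - nb (br X Y) Z)"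
    unfolding t1 by (simp add: algebra_simps)
  also have "\<dots> = br X (br Y Z) + br Y (br Z X) + br Z (br X Y)" by (simp only: torsion)
  also have "\<dots> = 0" by (rule jacobi)
  finally show ?thesis .
qed

lemma decomp: obtains v h where "v \<in> V" "h \<in> H" "x = v + h"
  using VHall[of x] by blast

lemma decomp_unique: "v \<in> V \<Longrightarrow> h \<in> H \<Longrightarrow> v' \<in> V \<Longrightarrow> h' \<in> H \<Longrightarrow> v + h = v' + h' \<Longrightarrow> v = v' \<and> h = h'"
proof -
  assume a: "v \<in> V" "h \<in> H" "v' \<in> V" "h' \<in> H" "v + h = v' + h'"
  have "v - v' = h' - h" using a(5) by (simp add: algebra_simps)
  moreover have "v - v' \<in> V" using a subV by (simp add: subspace_diff)
  moreover have "h' - h \<in> H" using a subH by (simp add: subspace_diff)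
  ultimately have "v - v' \<in> V \<inter> H" by simp
  then have "v - v' = 0" using VH0 by blast
  then show ?thesis using a(5) by simp
qed

lemma paraK_eq: "v \<in> V \<Longrightarrow> h \<in> H \<Longrightarrow> paraK V H (v + h) = v - h"
  unfolding paraK_def
proof (rule the_equality)
  assume "v \<in> V" "h \<in> H"
  then show "\<exists>v'\<in>V. \<exists>h'\<in>H. v + h = v' + h' \<and> v - h = v' - h'" by blast
  fix y assume "\<exists>v'\<in>V. \<exists>h'\<in>H. v + h = v' + h' \<and> y = v' - h'"
  then obtain v' h' where "v' \<in> V" "h' \<in> H" "v + h = v' + h'" "y = v' - h'" by blast
  then show "y = v - h" using decomp_unique[OF \<open>v \<in> V\<close> \<open>h \<in> H\<close>] by metis
qed

lemma perpV: "(\<And>w. w \<in> V \<Longrightarrow> g x w = 0) \<Longrightarrow> x \<in> V"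
proof -
  assume a: "\<And>w. w \<in> V \<Longrightarrow> g x w = 0"
  obtain v h where vh: "v \<in> V" "h \<in> H" "x = v + h" by (rule decomp)
  have "g h y = 0" for y
  proof -
    obtain v' h' where "v' \<in> V" "h' \<in> H" "y = v' + h'" by (rule decomp)
    moreover have "g h v' = 0" using a[OF \<open>v' \<in> V\<close>] isoV[OF vh(1) \<open>v' \<in> V\<close>] vh(3) by (simp add: g_simps)
    moreover have "g h h' = 0" using isoH vh(2) \<open>h' \<in> H\<close> by blast
    ultimately show ?thesis by (simp add: g_simps)
  qed
  then have "h = 0" by (rule g_eq0)
  then show "x \<in> V" using vh by simp
qed

lemma L1: "x \<in> V \<Longrightarrow> y \<in> V \<Longrightarrow> k \<in> H \<Longrightarrow>
   g (nb x y) k = g (br k x) y - \<theta> x * g y k / 2 + \<theta> y * g x k / 2"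
proof -
  assume a: "x \<in> V" "y \<in> V" "k \<in> H"
  have r: "- g (br x y) k - g (br x k) y + g (br y k) x = \<theta> x * g y k - \<theta> y * g x k"
    using rel1[OF a] .
  have "g (br x k) y = - g (br k x) y" using br_anti[of x k] by (simp add: g_simps)
  then show ?thesis using lc[of x y k] r by simp
qed

lemma L2: "x \<in> V \<Longrightarrow> y \<in> V \<Longrightarrow> y' \<in> V \<Longrightarrow> g (nb x y) y' = 0"
proof -
  assume a: "x \<in> V" "y \<in> V" "y' \<in> V"
  show ?thesis using lc[of x y y'] isoV[OF brV[OF a(1,2)] a(3)] isoV[OF brV[OF a(2,3)] a(1)]
      isoV[OF brV[OF a(3,1)] a(2)] by simp
qed

lemma nbV: "x \<in> V \<Longrightarrow> y \<in> V \<Longrightarrow> nb x y \<in> V"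
  using L2 perpV by blast

lemma L3H: "k \<in> H \<Longrightarrow> w \<in> V \<Longrightarrow> x \<in> V \<Longrightarrow> g (nb k w) x = \<theta> w * g k x / 2 - g w k * \<theta> x / 2"
proof -
  assume a: "k \<in> H" "w \<in> V" "x \<in> V"
  have r: "- g (br w x) k - g (br w k) x + g (br x k) w = \<theta> w * g x k - \<theta> x * g w k"
    using rel1[OF a(2,3,1)] .
  have "g (br k w) x = - g (br w k) x" using br_anti[of k w] by (simp add: g_simps)
  then show ?thesis using lc[of k w x] r g_sym[of x k] by (simp add: algebra_simps)
qed

lemma L3: "w \<in> V \<Longrightarrow> x \<in> V \<Longrightarrow> g (nb X w) x = \<theta> w * g X x / 2 - g w X * \<theta> x / 2"
proof -
  assume a: "w \<in> V" "x \<in> V"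
  obtain v h where vh: "v \<in> V" "h \<in> H" "X = v + h" by (rule decomp)
  have "g (nb X w) x = g (nb v w) x + g (nb h w) x" by (simp add: vh nb_simps g_simps)
  also have "\<dots> = \<theta> w * g h x / 2 - g w h * \<theta> x / 2" using L2[OF vh(1) a] L3H[OF vh(2) a] by simp
  also have "\<dots> = \<theta> w * g X x / 2 - g w X * \<theta> x / 2"
    using isoV[OF vh(1) a(2)] isoV[OF a(1) vh(1)] by (simp add: vh g_simps)
  finally show ?thesis .
qed

lemma gV_eq0: "x \<in> V \<Longrightarrow> (\<And>w. w \<in> V \<Longrightarrow> g x w = 0) \<Longrightarrow> x \<in> V" by simp

lemma LC_step: "x \<in> lower_central br j \<Longrightarrow> br y x \<in> lower_central br (Suc j)"
  by (auto intro!: span_base)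

lemma pow_LC: "((br y) ^^ j) x \<in> lower_central br j"
proof (induction j)
  case (Suc j)
  have "((br y) ^^ Suc j) x = br y (((br y) ^^ j) x)" by simp
  then show ?case using LC_step[OF Suc.IH, of y] by metis
qed simp

lemma ad_nil: "\<exists>k. \<forall>y x. ((br y) ^^ k) x = 0"
proof -
  obtain k where "lower_central br k = {0}" using nilp by blast
  then show ?thesis using pow_LC[where j=k] by blast
qed

lemma tr_ad: "(\<Sum>b\<in>Basis. br y b \<bullet> b) = 0"
proof -
  obtain k where "\<forall>y x. ((br y) ^^ k) x = 0" using ad_nil by blast
  then show ?thesis using nil_trace[OF br_linR[of y], of k] by blast
qed

lemma abel_half: "br x y = a *\<^sub>R x + d *\<^sub>R y \<Longrightarrow> d = 0 \<or> br x y = 0"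
proof -
  assume e: "br x y = a *\<^sub>R x + d *\<^sub>R y"
  have p: "((br x) ^^ Suc j) y = d ^ j *\<^sub>R (a *\<^sub>R x + d *\<^sub>R y)" for j
  proof (induction j)
    case 0 then show ?case using e by simp
  next
    case (Suc j)
    have "((br x) ^^ Suc (Suc j)) y = br x (((br x) ^^ Suc j) y)" by simp
    also have "\<dots> = d ^ j *\<^sub>R (a *\<^sub>R br x x + d *\<^sub>R br x y)" unfolding Suc by (simp add: br_simps)
    also have "\<dots> = d ^ Suc j *\<^sub>R (a *\<^sub>R x + d *\<^sub>R y)" by (simp add: br_alt e)
    finally show ?case .
  qed
  obtain k where k: "\<forall>y x. ((br y) ^^ k) x = 0" using ad_nil by blast
  have "((br x) ^^ Suc k) y = br x (((br x) ^^ k) y)" by simp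
  also have "\<dots> = 0" using k by (simp add: br_simps)
  finally have "d ^ k *\<^sub>R (a *\<^sub>R x + d *\<^sub>R y) = 0" using p[of k] by simp
  then show ?thesis using e by auto
qed

lemma abelian: "br x y = a *\<^sub>R x + d *\<^sub>R y \<Longrightarrow> br x y = 0"
proof -
  assume e: "br x y = a *\<^sub>R x + d *\<^sub>R y"
  show ?thesis
  proof (cases "d = 0")
    case True
    have "br y x = 0 *\<^sub>R y + (- a) *\<^sub>R x" using e True br_anti[of y x] by simp
    then have "- a = 0 \<or> br y x = 0" by (rule abel_half)
    then show ?thesis using e True br_anti[of y x] by auto
  next
    case False then show ?thesis using abel_half[OF e] by simp
  qed
qed

lemma eigen:
  assumes z: "z \<in> H" and v: "v \<in> V" and e: "br v z - l *\<^sub>R z \<in> V"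
  shows "l = 0 \<or> z = 0"
proof -
  have p: "((br v) ^^ j) z - l ^ j *\<^sub>R z \<in> V" for j
  proof (induction j)
    case 0 then show ?case using subspace_0[OF subV] by simp
  next
    case (Suc j)
    define p where "p = ((br v) ^^ j) z - l ^ j *\<^sub>R z"
    define q where "q = br v z - l *\<^sub>R z"
    have "((br v) ^^ Suc j) z - l ^ Suc j *\<^sub>R z = br v (p + l ^ j *\<^sub>R z) - l ^ Suc j *\<^sub>R z"
      by (simp add: p_def)
    also have "\<dots> = br v p + l ^ j *\<^sub>R q" by (simp add: q_def br_simps algebra_simps)
    finally show ?case using Suc[folded p_def] e[folded q_def] brV[OF v] subV
      by (simp add: subspace_add subspace_scale)
  qed
  obtain k where k: "\<forall>y x. ((br y) ^^ k) x = 0" using ad_nil by blast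
  have "- (l ^ k *\<^sub>R z) \<in> V" using p[of k] k by simp
  then have "l ^ k *\<^sub>R z \<in> V" using subV subspace_neg by fastforce
  moreover have "l ^ k *\<^sub>R z \<in> H" using z subH subspace_scale by blast
  ultimately have "l ^ k *\<^sub>R z = 0" using VH0 by blast
  then show ?thesis by auto
qed

lemma indep_coeff:
  fixes B :: "'a set"
  assumes "finite B" "independent B" "(\<Sum>c\<in>B. u c *\<^sub>R c) = (\<Sum>c\<in>B. w c *\<^sub>R c)" "b \<in> B"
  shows "u b = w b"
proof -
  have "(\<Sum>c\<in>B. (u c - w c) *\<^sub>R c) = 0" using assms(3) by (simp add: scaleR_diff_left sum_subtractf)
  then show ?thesis using assms(1,2,4) dependent_finite[OF assms(1)] by (metis right_minus_eq)
qed

lemma dual_basis_exists: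
  "\<exists>B f. finite B \<and> B \<subseteq> V \<and> card B = dim V \<and> (\<forall>b\<in>B. f b \<in> H) \<and>
     (\<forall>b\<in>B. \<forall>c\<in>B. g c (f b) = (if c = b then 1 else 0)) \<and> (\<forall>x\<in>V. x = (\<Sum>b\<in>B. g x (f b) *\<^sub>R b))"
proof -
  obtain B where B: "B \<subseteq> V" "independent B" "V \<subseteq> span B" "card B = dim V"
    using basis_exists[of V] by blast
  have fB: "finite B" using B(2) independent_imp_finite by blast
  have spanB: "span B = V" using B(1,3) subV span_minimal[of B V] by auto
  define \<Phi> where "\<Phi> y = (\<Sum>c\<in>B. g y c *\<^sub>R c)" for y
  have linP: "linear \<Phi>" unfolding \<Phi>_def
    by (intro linearI) (simp_all add: g_simps scaleR_add_left sum.distrib scaleR_sum_right)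
  have gV0: "g y v = 0" if a1: "\<And>c. c \<in> B \<Longrightarrow> g y c = 0" and a2: "v \<in> V" for y v
  proof -
    obtain a where "v = (\<Sum>c\<in>B. a c *\<^sub>R c)" using a2 spanB span_finite[OF fB] by auto
    then show ?thesis using a1 by (simp add: g_sum_right g_simps)
  qed
  have inj: "inj_on \<Phi> (span H)"
  proof -
    have "span H = H" using subH by simp
    moreover have "inj_on \<Phi> H"
    proof (subst linear_inj_on_iff_eq_0[OF linP subH], intro ballI impI)
      fix y assume y: "y \<in> H" "\<Phi> y = 0"
      have "g y c = 0" if "c \<in> B" for c
        using indep_coeff[OF fB B(2), of "\<lambda>c. g y c" "\<lambda>c. 0" c] y(2) that by (simp add: \<Phi>_def)
      then have "g y v = 0" if "v \<in> V" for v using gV0 that by blast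
      moreover have "g y h = 0" if "h \<in> H" for h using isoH y(1) that by blast
      ultimately have "g y x = 0" for x
        by (metis decomp g_simps(2) add_0)
      then show "y = 0" by (rule g_eq0)
    qed
    ultimately show ?thesis by (simp only:)
  qed
  have dimP: "dim (\<Phi> ` H) = dim H" by (rule dim_image_eq[OF linP inj])
  have subP: "subspace (\<Phi> ` H)" by (rule linear_subspace_image[OF linP subH])
  have PV: "\<Phi> ` H \<subseteq> V"
    unfolding \<Phi>_def using B(1) subV by (auto intro!: subspace_sum subspace_scale)
  have PHV: "\<Phi> ` H = V" using subspace_dim_equal[OF subP subV PV] dimP dimVH by simp
  have "\<forall>b\<in>B. \<exists>y\<in>H. \<forall>c\<in>B. g c y = (if c = b then 1 else 0)"
  proof
    fix b assume b: "b \<in> B"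
    then have "b \<in> \<Phi> ` H" using PHV B(1) by auto
    then obtain y where y: "y \<in> H" "\<Phi> y = b" by blast
    have bsum: "b = (\<Sum>c\<in>B. (if c = b then 1 else 0) *\<^sub>R c)"
      by (subst sum.remove[OF fB b]) (auto intro!: sum.neutral[symmetric])
    have "g y c = (if c = b then 1 else 0)" if "c \<in> B" for c
      using indep_coeff[OF fB B(2), of "\<lambda>c. g y c" "\<lambda>c. if c = b then 1 else 0" c] y(2) bsum that
      by (simp add: \<Phi>_def)
    then show "\<exists>y\<in>H. \<forall>c\<in>B. g c y = (if c = b then 1 else 0)" using y(1) g_sym by metis
  qed
  then obtain f where f: "\<forall>b\<in>B. f b \<in> H \<and> (\<forall>c\<in>B. g c (f b) = (if c = b then 1 else 0))"
    by metis
  have ex: "x = (\<Sum>b\<in>B. g x (f b) *\<^sub>R b)" if "x \<in> V" for x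
  proof -
    from that obtain a where a: "x = (\<Sum>c\<in>B. a c *\<^sub>R c)" using spanB span_finite[OF fB] by auto
    have "g x (f b) = a b" if "b \<in> B" for b
    proof -
      have "g x (f b) = (\<Sum>c\<in>B. a c * (if c = b then 1 else 0))"
        unfolding a using f that by (simp add: g_sum_left g_simps)
      also have "\<dots> = a b" using fB that by (simp add: if_distrib cong: if_cong)
      finally show ?thesis .
    qed
    then show ?thesis using a by simp
  qed
  show ?thesis using fB B(1,4) f ex by blast
qed

lemma nbVV: "(\<And>x. \<theta> x = 0) \<Longrightarrow> y \<in> V \<Longrightarrow> nb X y \<in> V"
proof -
  assume th0: "\<And>x. \<theta> x = 0" and y: "y \<in> V"
  show ?thesis
  proof (rule perpV)
    fix w assume "w \<in> V"
    then show "g (nb X y) w = 0" using L3[OF y, of w X] th0 by simp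
  qed
qed

lemma nbHH: "(\<And>x. \<theta> x = 0) \<Longrightarrow> y \<in> H \<Longrightarrow> nb X y \<in> H"
  using PH.nbVV[OF swap] by blast

lemma RcV: "(\<And>x. \<theta> x = 0) \<Longrightarrow> Z \<in> V \<Longrightarrow> Rc X Y Z \<in> V"
  unfolding Rc_def' using nbVV subV by (simp add: subspace_diff)

lemma RcH: "(\<And>x. \<theta> x = 0) \<Longrightarrow> Z \<in> H \<Longrightarrow> Rc X Y Z \<in> H"
  using PH.RcV[OF swap] by blast

lemma K_nb: "(\<And>x. \<theta> x = 0) \<Longrightarrow> paraK V H (nb X Y) = nb X (paraK V H Y)"
proof -
  assume th0: "\<And>x. \<theta> x = 0"
  obtain v h where vh: "v \<in> V" "h \<in> H" "Y = v + h" by (rule decomp)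
  have "paraK V H (nb X Y) = paraK V H (nb X v + nb X h)" by (simp add: vh nb_simps)
  also have "\<dots> = nb X v - nb X h" by (rule paraK_eq[OF nbVV[OF th0 vh(1)] nbHH[OF th0 vh(2)]])
  also have "\<dots> = nb X (paraK V H Y)" by (simp add: vh paraK_eq nb_simps)
  finally show ?thesis .
qed

lemma goalC: "(\<And>x. \<theta> x = 0) \<Longrightarrow> nabla_F br V H g X Y Z = 0"
  unfolding nabla_F_def fundamental_form_def
  using K_nb metric[of X "paraK V H Y" Z] by simp

lemma br0_nb0: "(\<And>x y. br x y = 0) \<Longrightarrow> nb X Y = 0"
  by (rule lc_eqI) (simp add: g_simps)

end

locale PHB = PH +
  fixes B :: "'a set" and f :: "'a \<Rightarrow> 'a"
  assumes finB: "finite B" and BV: "B \<subseteq> V" and cardB: "card B = dim V"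
    and fH: "\<And>b. b \<in> B \<Longrightarrow> f b \<in> H"
    and dual: "\<And>b c. b \<in> B \<Longrightarrow> c \<in> B \<Longrightarrow> g c (f b) = (if c = b then 1 else 0)"
    and expV: "\<And>x. x \<in> V \<Longrightarrow> x = (\<Sum>b\<in>B. g x (f b) *\<^sub>R b)"
begin

lemma dual': "b \<in> B \<Longrightarrow> c \<in> B \<Longrightarrow> g (f b) c = (if c = b then 1 else 0)"
  using dual g_sym by metis

lemma bV: "b \<in> B \<Longrightarrow> b \<in> V" using BV by auto

lemma sum_delta_B: "c \<in> B \<Longrightarrow> (\<Sum>b\<in>B. (if c = b then 1 else 0) * (u b :: real)) = u c"
  by (subst sum.remove[OF finB, of c]) (auto intro!: sum.neutral split: if_splits)

lemma sum_delta_B': "c \<in> B \<Longrightarrow> (\<Sum>b\<in>B. (if b = c then 1 else 0) * (u b :: real)) = u c"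
  by (subst sum.remove[OF finB, of c]) (auto intro!: sum.neutral split: if_splits)

lemma expH: "y \<in> H \<Longrightarrow> y = (\<Sum>b\<in>B. g y b *\<^sub>R f b)"
proof -
  assume y: "y \<in> H"
  define z where "z = y - (\<Sum>b\<in>B. g y b *\<^sub>R f b)"
  have zH: "z \<in> H" unfolding z_def using y fH subH
    by (auto intro!: subspace_diff subspace_sum subspace_scale)
  have zc: "g z c = 0" if "c \<in> B" for c
  proof -
    have "g z c = g y c - (\<Sum>b\<in>B. g y b * (if c = b then 1 else 0))"
      unfolding z_def using dual'[OF _ that] by (simp add: g_simps g_sum_left)
    also have "\<dots> = 0" using sum_delta_B[OF that, of "g y"] by (simp add: mult.commute)
    finally show ?thesis .
  qed
  have "g z w = 0" if "w \<in> V" for w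
  proof -
    have "g z w = g z (\<Sum>c\<in>B. g w (f c) *\<^sub>R c)" using expV[OF that] by simp
    also have "\<dots> = 0" by (simp add: g_sum_right g_simps zc)
    finally show ?thesis .
  qed
  then have "z \<in> V" by (rule perpV)
  then have "z = 0" using zH VH0 by blast
  then show ?thesis by (simp add: z_def)
qed

lemma expX: "x = (\<Sum>b\<in>B. g x (f b) *\<^sub>R b) + (\<Sum>b\<in>B. g x b *\<^sub>R f b)"
proof -
  obtain v h where vh: "v \<in> V" "h \<in> H" "x = v + h" by (rule decomp)
  have "(\<Sum>b\<in>B. g x (f b) *\<^sub>R b) = (\<Sum>b\<in>B. g v (f b) *\<^sub>R b)"
    using isoH[OF vh(2) fH] by (simp add: vh g_simps)
  moreover have "(\<Sum>b\<in>B. g x b *\<^sub>R f b) = (\<Sum>b\<in>B. g h b *\<^sub>R f b)"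
    using isoV[OF vh(1) bV] by (simp add: vh g_simps)
  ultimately show ?thesis using expV[OF vh(1)] expH[OF vh(2)] vh(3) by simp
qed

lemma gV_exp: "x \<in> V \<Longrightarrow> g x y = (\<Sum>b\<in>B. g x (f b) * g b y)"
proof -
  assume "x \<in> V"
  then have "g x y = g (\<Sum>b\<in>B. g x (f b) *\<^sub>R b) y" using expV by simp
  then show ?thesis by (simp add: g_sum_left g_simps)
qed

lemma gV_exp2: "x \<in> V \<Longrightarrow> g y x = (\<Sum>b\<in>B. g x (f b) * g y b)"
proof -
  assume a: "x \<in> V"
  have "g y x = g x y" by (rule g_sym)
  also have "\<dots> = (\<Sum>b\<in>B. g x (f b) * g b y)" by (rule gV_exp[OF a])
  also have "\<dots> = (\<Sum>b\<in>B. g x (f b) * g y b)" by (rule sum.cong[OF refl]) (simp add: g_sym[of _ y])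
  finally show ?thesis .
qed

lemma trace_B: "linear M \<Longrightarrow> (\<Sum>b\<in>Basis. M b \<bullet> b) = (\<Sum>b\<in>B. g (M b) (f b) + g (M (f b)) b)"
proof -
  assume M: "linear M"
  define \<phi> where "\<phi> p x = (if snd p then g x (f (fst p)) else g x (fst p))" for p :: "'a \<times> bool" and x
  define e where "e p = (if snd p then fst p else f (fst p))" for p :: "'a \<times> bool"
  have fin: "finite (B \<times> (UNIV :: bool set))" using finB by simp
  have lin: "linear (\<phi> p)" for p unfolding \<phi>_def
    by (cases "snd p") (auto intro!: linearI simp: g_simps)
  have split: "(\<Sum>p\<in>B \<times> (UNIV :: bool set). F p) = (\<Sum>b\<in>B. F (b, True) + F (b, False))" for F :: "'a \<times> bool \<Rightarrow> 'c::comm_monoid_add"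
    by (subst sum.cartesian_product') (simp add: UNIV_bool add.commute)
  have ex: "x = (\<Sum>p\<in>B \<times> (UNIV :: bool set). \<phi> p x *\<^sub>R e p)" for x
    unfolding split using expX[of x] by (simp add: \<phi>_def e_def sum.distrib)
  have "(\<Sum>b\<in>Basis. M b \<bullet> b) = (\<Sum>p\<in>B \<times> (UNIV :: bool set). \<phi> p (M (e p)))"
    by (rule trace_expand[OF fin M lin ex])
  also have "\<dots> = (\<Sum>b\<in>B. g (M b) (f b) + g (M (f b)) b)"
    unfolding split by (simp add: \<phi>_def e_def)
  finally show ?thesis .
qed

lemma ricci_B: "ricci br g Y Z = (\<Sum>b\<in>B. g (Rc b Y Z) (f b) + g (Rc (f b) Y Z) b)"
  unfolding ricci_def by (rule trace_B[OF Rc_linL])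

lemma m_def': "(\<Sum>b\<in>B. g b (f b)) = real (card B)"
  using dual by simp

lemma tr_all: "(\<Sum>b\<in>B. g (br u b) (f b) + g (br u (f b)) b) = 0"
  using tr_ad[of u] trace_B[OF br_linR[of u]] by simp

definition pV where "pV x = (\<Sum>b\<in>B. g x (f b) *\<^sub>R b)"
definition pH where "pH x = (\<Sum>b\<in>B. g x b *\<^sub>R f b)"

lemma pV_lin: "linear pV" unfolding pV_def
  by (intro linearI) (simp_all add: g_simps scaleR_add_left sum.distrib scaleR_sum_right)
lemma pH_lin: "linear pH" unfolding pH_def
  by (intro linearI) (simp_all add: g_simps scaleR_add_left sum.distrib scaleR_sum_right)
lemma pV_V: "pV x \<in> V" unfolding pV_def using bV subV by (auto intro!: subspace_sum subspace_scale)
lemma pH_H: "pH x \<in> H" unfolding pH_def using fH subH by (auto intro!: subspace_sum subspace_scale)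
lemma pV_id: "x \<in> V \<Longrightarrow> pV x = x" unfolding pV_def using expV by simp
lemma pH_id: "x \<in> H \<Longrightarrow> pH x = x" unfolding pH_def using expH by simp
lemma pV_H: "x \<in> H \<Longrightarrow> pV x = 0" unfolding pV_def using isoH fH by simp
lemma pH_V: "x \<in> V \<Longrightarrow> pH x = 0" unfolding pH_def using isoV bV by simp

lemma tr_V: "y \<in> V \<Longrightarrow> (\<Sum>b\<in>B. g (br y b) (f b)) = 0"
proof -
  assume y: "y \<in> V"
  define N where "N x = br y (pV x)" for x
  have linN: "linear N" unfolding N_def using linear_compose[OF pV_lin br_linR[of y]] by (simp add: o_def)
  have powV: "((br y) ^^ j) w \<in> V" if "w \<in> V" for w j
    using that by (induction j) (auto intro: brV[OF y])
  have Np: "(N ^^ Suc j) x = ((br y) ^^ Suc j) (pV x)" for j x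
  proof (induction j)
    case 0 then show ?case by (simp add: N_def)
  next
    case (Suc j)
    have "(N ^^ Suc (Suc j)) x = N ((N ^^ Suc j) x)" by simp
    also have "\<dots> = br y (pV (((br y) ^^ Suc j) (pV x)))" unfolding Suc by (simp add: N_def)
    also have "\<dots> = ((br y) ^^ Suc (Suc j)) (pV x)" using pV_id[OF powV[OF pV_V[of x], of "Suc j"]] by simp
    finally show ?case .
  qed
  obtain k where k: "\<forall>y x. ((br y) ^^ k) x = 0" using ad_nil by blast
  have nil: "(N ^^ Suc k) x = 0" for x
    using Np[of k x] k by (simp add: br_simps)
  have "(\<Sum>b\<in>Basis. N b \<bullet> b) = 0" by (rule nil_trace[OF linN nil])
  then show ?thesis using trace_B[OF linN] by (simp add: N_def pV_id[OF bV] pV_H[OF fH] br_simps g_simps)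
qed

lemma tr_V2: "y \<in> V \<Longrightarrow> (\<Sum>b\<in>B. g (br y (f b)) b) = 0"
  using tr_all[of y] tr_V by (simp add: sum.distrib)

lemma tr_H: "y \<in> H \<Longrightarrow> (\<Sum>b\<in>B. g (br y (f b)) b) = 0"
proof -
  assume y: "y \<in> H"
  define N where "N x = br y (pH x)" for x
  have linN: "linear N" unfolding N_def using linear_compose[OF pH_lin br_linR[of y]] by (simp add: o_def)
  have powH: "((br y) ^^ j) w \<in> H" if "w \<in> H" for w j
    using that by (induction j) (auto intro: brH[OF y])
  have Np: "(N ^^ Suc j) x = ((br y) ^^ Suc j) (pH x)" for j x
  proof (induction j)
    case 0 then show ?case by (simp add: N_def)
  next
    case (Suc j)
    have "(N ^^ Suc (Suc j)) x = N ((N ^^ Suc j) x)" by simp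
    also have "\<dots> = br y (pH (((br y) ^^ Suc j) (pH x)))" unfolding Suc by (simp add: N_def)
    also have "\<dots> = ((br y) ^^ Suc (Suc j)) (pH x)" using pH_id[OF powH[OF pH_H[of x], of "Suc j"]] by simp
    finally show ?case .
  qed
  obtain k where k: "\<forall>y x. ((br y) ^^ k) x = 0" using ad_nil by blast
  have nil: "(N ^^ Suc k) x = 0" for x
    using Np[of k x] k by (simp add: br_simps)
  have "(\<Sum>b\<in>Basis. N b \<bullet> b) = 0" by (rule nil_trace[OF linN nil])
  then show ?thesis using trace_B[OF linN] by (simp add: N_def pH_id[OF fH] pH_V[OF bV] br_simps g_simps)
qed

lemma tr_H2: "y \<in> H \<Longrightarrow> (\<Sum>b\<in>B. g (br y b) (f b)) = 0"
  using tr_all[of y] tr_H by (simp add: sum.distrib)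


definition xi where "xi = (\<Sum>b\<in>B. br b (f b))"
definition zeta where "zeta = (\<Sum>b\<in>B. \<theta> b *\<^sub>R f b)"
abbreviation m where "m \<equiv> real (card B)"

lemma zetaH: "zeta \<in> H" unfolding zeta_def using fH subH by (auto intro!: subspace_sum subspace_scale)

lemma g_zeta: "x \<in> V \<Longrightarrow> g x zeta = \<theta> x"
proof -
  assume x: "x \<in> V"
  have "g x zeta = (\<Sum>b\<in>B. \<theta> b * g x (f b))" unfolding zeta_def by (simp add: g_sum_right g_simps)
  also have "\<dots> = \<theta> (\<Sum>b\<in>B. g x (f b) *\<^sub>R b)" by (simp add: th_sum th_simps mult.commute)
  also have "\<dots> = \<theta> x" using expV[OF x] by simp
  finally show ?thesis .
qed

lemma g_zeta': "x \<in> V \<Longrightarrow> g zeta x = \<theta> x" using g_zeta g_sym by metis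


lemma lin_expV:
  assumes "linear F" "w \<in> V"
  shows "(\<Sum>b\<in>B. g w (f b) *\<^sub>R F b) = F w"
proof -
  have "F w = F (\<Sum>b\<in>B. g w (f b) *\<^sub>R b)" using expV[OF assms(2)] by simp
  also have "\<dots> = (\<Sum>b\<in>B. g w (f b) *\<^sub>R F b)" by (simp add: linear_sum[OF assms(1)] linear_scale[OF assms(1)])
  finally show ?thesis by simp
qed

lemma T1: "(\<Sum>b\<in>B. g u (nb b (f b)) + g u (nb (f b) b)) = 0"
proof -
  have e: "g u (nb b (f b)) + g u (nb (f b) b) = g (br u b) (f b) + g (br u (f b)) b" for b
  proof -
    have "2 * g (nb b (f b)) u + 2 * g (nb (f b) b) u = 2 * g (br u b) (f b) + 2 * g (br u (f b)) b"
      unfolding lc using br_anti[of "f b" b] br_anti[of "f b" u] br_anti[of b u] by (simp add: g_simps)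
    then show ?thesis using g_sym[of u "nb b (f b)"] g_sym[of u "nb (f b) b"] by simp
  qed
  show ?thesis unfolding e by (rule tr_all)
qed

lemma A2: "w \<in> V \<Longrightarrow> (\<Sum>b\<in>B. g (nb b w) (f b)) = - g xi w - \<theta> w / 2 + m * \<theta> w / 2"
proof -
  assume w: "w \<in> V"
  have "(\<Sum>b\<in>B. g (nb b w) (f b)) = (\<Sum>b\<in>B. g (br (f b) b) w - \<theta> b * g w (f b) / 2 + \<theta> w * g b (f b) / 2)"
    using L1[OF bV w fH] by simp
  also have "\<dots> = (\<Sum>b\<in>B. g (br (f b) b) w) - (\<Sum>b\<in>B. g w (f b) * \<theta> b) / 2 + \<theta> w * (\<Sum>b\<in>B. g b (f b)) / 2"
    by (simp add: sum.distrib sum_subtractf sum_divide_distrib sum_distrib_left mult.commute)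
  also have "(\<Sum>b\<in>B. g (br (f b) b) w) = - g xi w"
    unfolding xi_def using br_anti[of "f _" "_"] by (simp add: g_sum_left g_simps sum_negf)
  also have "(\<Sum>b\<in>B. g w (f b) * \<theta> b) = \<theta> w" using lin_expV[OF th_lin w] by simp
  also have "(\<Sum>b\<in>B. g b (f b)) = m" by (rule m_def')
  finally show ?thesis by (simp add: algebra_simps)
qed


lemma th_nb: "v \<in> V \<Longrightarrow> w \<in> V \<Longrightarrow> \<theta> (nb v w) = g (br zeta v) w"
proof -
  assume v: "v \<in> V" and w: "w \<in> V"
  have "\<theta> (nb v w) = g (nb v w) zeta" using g_zeta[OF nbV[OF v w]] by simp
  also have "\<dots> = g (br zeta v) w - \<theta> v * g w zeta / 2 + \<theta> w * g v zeta / 2" by (rule L1[OF v w zetaH])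
  also have "\<dots> = g (br zeta v) w" using g_zeta[OF v] g_zeta[OF w] by simp
  finally show ?thesis .
qed

lemma A1: "v \<in> V \<Longrightarrow> w \<in> V \<Longrightarrow> (\<Sum>b\<in>B. g (nb b w) (nb v (f b))) =
   - (\<Sum>b\<in>B. g (br (f b) v) (nb b w)) + \<theta> v / 2 * (\<Sum>b\<in>B. g (nb b w) (f b)) - \<theta> (nb v w) / 2"
proof -
  assume v: "v \<in> V" and w: "w \<in> V"
  have e: "g (nb b w) (nb v (f b)) = - (g (br (f b) v) (nb b w) - \<theta> v * g (nb b w) (f b) / 2 + \<theta> (nb b w) * g v (f b) / 2)"
    if b: "b \<in> B" for b
  proof -
    have "g (nb b w) (nb v (f b)) = - g (nb v (nb b w)) (f b)" using metric[of v "nb b w" "f b"] by simp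
    also have "\<dots> = - (g (br (f b) v) (nb b w) - \<theta> v * g (nb b w) (f b) / 2 + \<theta> (nb b w) * g v (f b) / 2)"
      using L1[OF v nbV[OF bV[OF b] w] fH[OF b]] by simp
    finally show ?thesis .
  qed
  have s: "(\<Sum>b\<in>B. \<theta> (nb b w) * g v (f b)) = \<theta> (nb v w)"
    using lin_expV[OF linear_compose[OF nb_linL th_lin] v, of w] by (simp add: o_def mult.commute)
  have "(\<Sum>b\<in>B. g (nb b w) (nb v (f b))) = - (\<Sum>b\<in>B. g (br (f b) v) (nb b w)) + \<theta> v / 2 * (\<Sum>b\<in>B. g (nb b w) (f b)) - (\<Sum>b\<in>B. \<theta> (nb b w) * g v (f b)) / 2"
    by (simp add: e sum.distrib sum_subtractf sum_negf sum_divide_distrib sum_distrib_left algebra_simps)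
  then show ?thesis unfolding s .
qed

lemma A3: "v \<in> V \<Longrightarrow> w \<in> V \<Longrightarrow> (\<Sum>b\<in>B. g (br (f b) v) (nb b w)) =
   (\<Sum>b\<in>B. \<Sum>c\<in>B. g (br (f b) v) c * g (br (f c) b) w) - g (br zeta v) w / 2"
proof -
  assume v: "v \<in> V" and w: "w \<in> V"
  have e: "g (br (f b) v) (nb b w) = (\<Sum>c\<in>B. g (br (f b) v) c * g (br (f c) b) w)
      - \<theta> b * g (br (f b) v) w / 2 + \<theta> w * g (br (f b) v) b / 2" if b: "b \<in> B" for b
  proof -
    have "g (br (f b) v) (nb b w) = (\<Sum>c\<in>B. g (nb b w) (f c) * g (br (f b) v) c)"
      by (rule gV_exp2[OF nbV[OF bV[OF b] w]])
    also have "\<dots> = (\<Sum>c\<in>B. (g (br (f c) b) w - \<theta> b * g w (f c) / 2 + \<theta> w * g b (f c) / 2) * g (br (f b) v) c)"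
      using L1[OF bV[OF b] w fH] by simp
    also have "\<dots> = (\<Sum>c\<in>B. g (br (f b) v) c * g (br (f c) b) w) - \<theta> b * (\<Sum>c\<in>B. g w (f c) * g (br (f b) v) c) / 2
        + \<theta> w * (\<Sum>c\<in>B. g b (f c) * g (br (f b) v) c) / 2"
      by (simp add: sum.distrib sum_subtractf sum_divide_distrib sum_distrib_left algebra_simps)
    also have "(\<Sum>c\<in>B. g w (f c) * g (br (f b) v) c) = g (br (f b) v) w" using gV_exp2[OF w] by simp
    also have "(\<Sum>c\<in>B. g b (f c) * g (br (f b) v) c) = g (br (f b) v) b" using gV_exp2[OF bV[OF b]] by simp
    finally show ?thesis .
  qed
  have s1: "(\<Sum>b\<in>B. \<theta> b * g (br (f b) v) w) = g (br zeta v) w"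
    unfolding zeta_def by (simp add: br_sum_left g_sum_left br_simps g_simps)
  have s2: "(\<Sum>b\<in>B. g (br (f b) v) b) = 0"
    using tr_V2[OF v] br_anti[of "f _" v] by (simp add: g_simps sum_negf)
  show ?thesis
    by (simp add: e sum.distrib sum_subtractf sum_divide_distrib[symmetric] sum_distrib_left[symmetric] s1 s2)
qed


lemma A4: "v \<in> V \<Longrightarrow> w \<in> V \<Longrightarrow> (\<Sum>b\<in>B. g (nb (f b) w) (nb v b)) =
   \<theta> w / 2 * (\<theta> v / 2 - m * \<theta> v / 2) - \<theta> (nb v w) / 2"
proof -
  assume v: "v \<in> V" and w: "w \<in> V"
  have e: "g (nb (f b) w) (nb v b) = \<theta> w * g (nb v b) (f b) / 2 - g w (f b) * \<theta> (nb v b) / 2"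
    if b: "b \<in> B" for b
    using L3[OF w nbV[OF v bV[OF b]], of "f b"] g_sym[of "f b" "nb v b"] by simp
  have s1: "(\<Sum>b\<in>B. g (nb v b) (f b)) = \<theta> v / 2 - m * \<theta> v / 2"
  proof -
    have "(\<Sum>b\<in>B. g (nb v b) (f b)) = (\<Sum>b\<in>B. g (br (f b) v) b - \<theta> v * g b (f b) / 2 + \<theta> b * g v (f b) / 2)"
      using L1[OF v bV fH] by simp
    also have "\<dots> = (\<Sum>b\<in>B. g (br (f b) v) b) - \<theta> v * (\<Sum>b\<in>B. g b (f b)) / 2 + (\<Sum>b\<in>B. g v (f b) * \<theta> b) / 2"
      by (simp add: sum.distrib sum_subtractf sum_divide_distrib sum_distrib_left algebra_simps)
    also have "(\<Sum>b\<in>B. g (br (f b) v) b) = 0"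
      using tr_V2[OF v] br_anti[of "f _" v] by (simp add: g_simps sum_negf)
    also have "(\<Sum>b\<in>B. g v (f b) * \<theta> b) = \<theta> v" using lin_expV[OF th_lin v] by simp
    also have "(\<Sum>b\<in>B. g b (f b)) = m" by (rule m_def')
    finally show ?thesis by (simp add: algebra_simps)
  qed
  have s2: "(\<Sum>b\<in>B. g w (f b) * \<theta> (nb v b)) = \<theta> (nb v w)"
    using lin_expV[OF linear_compose[OF nb_linR th_lin] w, of v] by (simp add: o_def)
  have "(\<Sum>b\<in>B. g (nb (f b) w) (nb v b)) = \<theta> w * (\<Sum>b\<in>B. g (nb v b) (f b)) / 2 - (\<Sum>b\<in>B. g w (f b) * \<theta> (nb v b)) / 2"
    by (simp add: e sum_subtractf sum_divide_distrib sum_distrib_left)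
  then show ?thesis unfolding s1 s2 by simp
qed

lemma A5: "v \<in> V \<Longrightarrow> w \<in> V \<Longrightarrow> (\<Sum>b\<in>B. g (nb (br b v) w) (f b)) =
   (\<Sum>b\<in>B. g (br (f b) (br b v)) w) - \<theta> (br w v) / 2"
proof -
  assume v: "v \<in> V" and w: "w \<in> V"
  have e: "g (nb (br b v) w) (f b) = g (br (f b) (br b v)) w - \<theta> (br b v) * g w (f b) / 2 + \<theta> w * g (br b v) (f b) / 2"
    if b: "b \<in> B" for b
    using L1[OF brV[OF bV[OF b] v] w fH[OF b]] by simp
  have s1: "(\<Sum>b\<in>B. g w (f b) * \<theta> (br b v)) = \<theta> (br w v)"
    using lin_expV[OF linear_compose[OF br_linL th_lin] w, of v] by (simp add: o_def)
  have s2: "(\<Sum>b\<in>B. g (br b v) (f b)) = 0"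
    using tr_V[OF v] br_anti[of _ v] by (simp add: g_simps sum_negf)
  have "(\<Sum>b\<in>B. g (nb (br b v) w) (f b)) = (\<Sum>b\<in>B. g (br (f b) (br b v)) w) - (\<Sum>b\<in>B. g w (f b) * \<theta> (br b v)) / 2
     + \<theta> w * (\<Sum>b\<in>B. g (br b v) (f b)) / 2"
    by (simp add: e sum.distrib sum_subtractf sum_divide_distrib sum_distrib_left algebra_simps)
  then show ?thesis unfolding s1 s2 by simp
qed

lemma A6: "v \<in> V \<Longrightarrow> w \<in> V \<Longrightarrow> (\<Sum>b\<in>B. g (nb (br (f b) v) w) b) = - g w (br zeta v) / 2"
proof -
  assume v: "v \<in> V" and w: "w \<in> V"
  have e: "g (nb (br (f b) v) w) b = \<theta> w * g (br (f b) v) b / 2 - g w (br (f b) v) * \<theta> b / 2"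
    if b: "b \<in> B" for b
    using L3[OF w bV[OF b]] by simp
  have s1: "(\<Sum>b\<in>B. g (br (f b) v) b) = 0"
    using tr_V2[OF v] br_anti[of "f _" v] by (simp add: g_simps sum_negf)
  have s2: "(\<Sum>b\<in>B. g w (br (f b) v) * \<theta> b) = g w (br zeta v)"
    unfolding zeta_def by (simp add: br_sum_left g_sum_right br_simps g_simps mult.commute)
  have "(\<Sum>b\<in>B. g (nb (br (f b) v) w) b) = \<theta> w * (\<Sum>b\<in>B. g (br (f b) v) b) / 2 - (\<Sum>b\<in>B. g w (br (f b) v) * \<theta> b) / 2"
    by (simp add: e sum_subtractf sum_divide_distrib sum_distrib_left)
  then show ?thesis unfolding s1 s2 by simp
qed

lemma A7: "v \<in> V \<Longrightarrow> w \<in> V \<Longrightarrow> (\<Sum>b\<in>B. g (br (f b) (br b v)) w) =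
   - (\<Sum>b\<in>B. \<Sum>c\<in>B. g (br (f b) v) c * g (br (f c) b) w) + g (br v xi) w"
proof -
  assume v: "v \<in> V" and w: "w \<in> V"
  have jac: "br (f b) (br b v) = - br b (br v (f b)) + br v (br b (f b))" for b
  proof -
    have "br (f b) (br b v) + br b (br v (f b)) + br v (br (f b) b) = 0" by (rule jacobi)
    then show ?thesis using br_anti[of "f b" b] by (simp add: br_simps algebra_simps)
  qed
  have e: "g (br b (br v (f b))) w = (\<Sum>c\<in>B. g (br (f b) v) c * g (br (f c) b) w)" if b: "b \<in> B" for b
  proof -
    have "br b (br v (f b)) = br b (\<Sum>c\<in>B. g (br v (f b)) (f c) *\<^sub>R c) + br b (\<Sum>c\<in>B. g (br v (f b)) c *\<^sub>R f c)"
      using expX[of "br v (f b)"] by (metis br_simps(2))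
    then have "g (br b (br v (f b))) w = (\<Sum>c\<in>B. g (br v (f b)) (f c) * g (br b c) w) + (\<Sum>c\<in>B. g (br v (f b)) c * g (br b (f c)) w)"
      by (simp add: br_sum_right g_sum_left br_simps g_simps)
    also have "(\<Sum>c\<in>B. g (br v (f b)) (f c) * g (br b c) w) = 0"
      using isoV[OF brV[OF bV[OF b] bV] w] by simp
    also have "(\<Sum>c\<in>B. g (br v (f b)) c * g (br b (f c)) w) = (\<Sum>c\<in>B. g (br (f b) v) c * g (br (f c) b) w)"
      using br_anti[of v "f b"] br_anti[of b "f _"] by (simp add: g_simps)
    finally show ?thesis by simp
  qed
  have "(\<Sum>b\<in>B. g (br (f b) (br b v)) w) = - (\<Sum>b\<in>B. g (br b (br v (f b))) w) + g (br v xi) w"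
    unfolding jac xi_def by (simp add: g_simps br_sum_right g_sum_left sum_negf sum_subtractf)
  then show ?thesis using e by simp
qed

lemma ric_VV: "v \<in> V \<Longrightarrow> w \<in> V \<Longrightarrow> ricci br g v w = - g (br v xi) w - \<theta> v * g xi w / 2 + \<theta> (br w v) / 2"
proof -
  assume v: "v \<in> V" and w: "w \<in> V"
  define u where "u = nb v w"
  have "ricci br g v w = (\<Sum>b\<in>B. - (g u (nb b (f b)) + g u (nb (f b) b)) + g (nb b w) (nb v (f b))
      + g (nb (f b) w) (nb v b) - g (nb (br b v) w) (f b) - g (nb (br (f b) v) w) b)"
    unfolding ricci_B Rg u_def by (simp add: algebra_simps)
  also have "\<dots> = - (\<Sum>b\<in>B. g u (nb b (f b)) + g u (nb (f b) b)) + (\<Sum>b\<in>B. g (nb b w) (nb v (f b)))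
      + (\<Sum>b\<in>B. g (nb (f b) w) (nb v b)) - (\<Sum>b\<in>B. g (nb (br b v) w) (f b)) - (\<Sum>b\<in>B. g (nb (br (f b) v) w) b)"
    by (simp add: sum.distrib sum_subtractf sum_negf)
  also have "\<dots> = - g (br v xi) w - \<theta> v * g xi w / 2 + \<theta> (br w v) / 2"
    unfolding T1 A1[OF v w] A2[OF w] A3[OF v w] A4[OF v w] A5[OF v w] A6[OF v w] A7[OF v w] th_nb[OF v w]
    using g_sym[of w "br zeta v"] by (simp add: algebra_simps)
  finally show ?thesis .
qed


lemma Xi1: "x \<in> V \<Longrightarrow> g xi x = (m - 1) * \<theta> x"
proof -
  assume x: "x \<in> V"
  have e: "- g (br x b) (f b) - g (br x (f b)) b + g (br b (f b)) x = \<theta> x * g b (f b) - \<theta> b * g x (f b)"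
    if b: "b \<in> B" for b using rel1[OF x bV[OF b] fH[OF b]] .
  have "(\<Sum>b\<in>B. - g (br x b) (f b) - g (br x (f b)) b + g (br b (f b)) x) = (\<Sum>b\<in>B. \<theta> x * g b (f b) - \<theta> b * g x (f b))"
    using e by simp
  then have "- (\<Sum>b\<in>B. g (br x b) (f b)) - (\<Sum>b\<in>B. g (br x (f b)) b) + g xi x = \<theta> x * (\<Sum>b\<in>B. g b (f b)) - (\<Sum>b\<in>B. g x (f b) * \<theta> b)"
    unfolding xi_def by (simp add: sum.distrib sum_subtractf sum_negf sum_distrib_left g_sum_left mult.commute)
  then show ?thesis using tr_V[OF x] tr_V2[OF x] m_def' lin_expV[OF th_lin x] by (simp add: algebra_simps)
qed

lemma pH_xi: "pH xi = (m - 1) *\<^sub>R zeta"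
  unfolding pH_def zeta_def using Xi1[OF bV] by (simp add: scaleR_sum_right)

lemma g_br_xi: "v \<in> V \<Longrightarrow> w \<in> V \<Longrightarrow> g (br v xi) w = (m - 1) * g (br v zeta) w"
proof -
  assume v: "v \<in> V" and w: "w \<in> V"
  have "xi = pV xi + pH xi" using expX[of xi] by (simp add: pV_def pH_def)
  then have "g (br v xi) w = g (br v (pV xi)) w + g (br v (pH xi)) w" by (metis br_simps(2) g_simps(1))
  also have "g (br v (pV xi)) w = 0" using isoV[OF brV[OF v pV_V] w] .
  finally show ?thesis unfolding pH_xi by (simp add: br_simps g_simps)
qed

lemma X3: "v \<in> V \<Longrightarrow> w \<in> V \<Longrightarrow> g (br w zeta) v - g (br v zeta) w = \<theta> (br v w)"
proof -
  assume v: "v \<in> V" and w: "w \<in> V"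
  have "- g (br v w) zeta - g (br v zeta) w + g (br w zeta) v = \<theta> v * g w zeta - \<theta> w * g v zeta"
    by (rule rel1[OF v w zetaH])
  then show ?thesis using g_zeta[OF v] g_zeta[OF w] g_zeta[OF brV[OF v w]] by simp
qed

lemma E: "v \<in> V \<Longrightarrow> w \<in> V \<Longrightarrow> (m - 1) * g (br v zeta) w + (m - 1) * \<theta> v * \<theta> w / 2 - \<theta> (br w v) / 2 = 0"
proof -
  assume v: "v \<in> V" and w: "w \<in> V"
  have "ricci br g v w = 0" using einst isoV[OF v w] by simp
  then show ?thesis unfolding ric_VV[OF v w] g_br_xi[OF v w] Xi1[OF w] by (simp add: algebra_simps)
qed

lemma m2: "(m - 2) * \<theta> (br v w) = 0" if v: "v \<in> V" and w: "w \<in> V"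
proof -
  have "\<theta> (br w v) = - \<theta> (br v w)" using br_anti[of w v] by (simp add: th_simps)
  then have "m * \<theta> (br v w) - 2 * \<theta> (br v w) = 0"
    using E[OF v w] E[OF w v] X3[OF v w] by (simp only: algebra_simps)
  then show ?thesis by (simp add: algebra_simps)
qed

lemma abelianV2: "card B = 2 \<Longrightarrow> v \<in> V \<Longrightarrow> w \<in> V \<Longrightarrow> br v w = 0"
proof -
  assume c2: "card B = 2" and v: "v \<in> V" and w: "w \<in> V"
  have bc: "br b d = 0" if b: "b \<in> B" and d: "d \<in> B" for b d
  proof (cases "b = d")
    case True then show ?thesis using br_alt by simp
  next
    case False
    have Bbd: "B = {b, d}"
    proof -
      have "{b, d} \<subseteq> B" using b d by auto
      moreover have "card {b, d} = 2" using False by simp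
      ultimately show ?thesis using c2 finB by (metis card_subset_eq)
    qed
    have "br b d = (\<Sum>e\<in>B. g (br b d) (f e) *\<^sub>R e)" using expV[OF brV[OF bV[OF b] bV[OF d]]] .
    also have "\<dots> = g (br b d) (f b) *\<^sub>R b + g (br b d) (f d) *\<^sub>R d" using False by (simp add: Bbd)
    finally show ?thesis by (rule abelian)
  qed
  have "br v w = br (\<Sum>b\<in>B. g v (f b) *\<^sub>R b) (\<Sum>d\<in>B. g w (f d) *\<^sub>R d)" using expV[OF v] expV[OF w] by simp
  also have "\<dots> = 0" by (simp add: br_sum_left br_sum_right br_simps bc)
  finally show ?thesis .
qed

lemma goalA: "card B \<ge> 2 \<Longrightarrow> v \<in> V \<Longrightarrow> \<theta> v = 0"
proof -
  assume c: "card B \<ge> 2" and v: "v \<in> V"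
  have thbr: "\<theta> (br v' w) = 0" if v': "v' \<in> V" and w: "w \<in> V" for v' w
  proof (cases "card B = 2")
    case True then show ?thesis using abelianV2[OF True v' w] th_simps by simp
  next
    case False
    then have "m - 2 \<noteq> 0" using c by simp
    then show ?thesis using m2[OF v' w] by simp
  qed
  have gz: "g (br v zeta) w = - (\<theta> v / 2) * g zeta w" if w: "w \<in> V" for w
  proof -
    have "(m - 1) * (g (br v zeta) w + \<theta> v * \<theta> w / 2) = 0"
      using E[OF v w] thbr[OF w v] by (simp add: algebra_simps)
    moreover have "m - 1 \<noteq> 0" using c by simp
    ultimately have "g (br v zeta) w + \<theta> v * \<theta> w / 2 = 0" by simp
    then show ?thesis using g_zeta'[OF w] by simp
  qed
  have "br v zeta - (- (\<theta> v / 2)) *\<^sub>R zeta \<in> V"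
  proof (rule perpV)
    fix w assume w: "w \<in> V"
    show "g (br v zeta - (- (\<theta> v / 2)) *\<^sub>R zeta) w = 0" using gz[OF w] by (simp add: g_simps)
  qed
  then have "- (\<theta> v / 2) = 0 \<or> zeta = 0" by (rule eigen[OF zetaH v])
  then show ?thesis
  proof
    assume "zeta = 0" then show ?thesis using g_zeta'[OF v] by (simp add: g_simps)
  qed simp
qed


lemma xi0: "(\<And>x. \<theta> x = 0) \<Longrightarrow> xi = 0"
proof -
  assume th0: "\<And>x. \<theta> x = 0"
  have gV: "g xi x = 0" if "x \<in> V" for x using Xi1[OF that] th0 by simp
  have gH: "g xi y = 0" if y: "y \<in> H" for y
  proof -
    have e: "- g (br y (f b)) b - g (br y b) (f b) + g (br (f b) b) y = 0" if b: "b \<in> B" for b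
      using rel2[OF y fH[OF b] bV[OF b]] th0 by simp
    have "- (\<Sum>b\<in>B. g (br y (f b)) b) - (\<Sum>b\<in>B. g (br y b) (f b)) + (\<Sum>b\<in>B. g (br (f b) b) y) = 0"
      using e by (simp add: sum.distrib[symmetric] sum_subtractf[symmetric] sum_negf[symmetric])
    moreover have "(\<Sum>b\<in>B. g (br (f b) b) y) = - g xi y"
      unfolding xi_def using br_anti[of "f _" "_"] by (simp add: g_sum_left g_simps sum_negf)
    ultimately show ?thesis using tr_H[OF y] tr_H2[OF y] by simp
  qed
  have "g xi z = 0" for z
  proof -
    obtain v h where "v \<in> V" "h \<in> H" "z = v + h" by (rule decomp)
    then show ?thesis using gV gH by (simp add: g_simps)
  qed
  then show ?thesis by (rule g_eq0)
qed

lemma ric_VH: "(\<And>x. \<theta> x = 0) \<Longrightarrow> v \<in> V \<Longrightarrow> h \<in> H \<Longrightarrow> ricci br g v h = - (\<Sum>b\<in>B. g (nb (br v h) b) (f b))"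
proof -
  assume th0: "\<And>x. \<theta> x = 0" and v: "v \<in> V" and h: "h \<in> H"
  have t1: "g (Rc b v h) (f b) = 0" if b: "b \<in> B" for b
    using isoH[OF RcH[OF th0 h] fH[OF b]] .
  have t2: "g (Rc (f b) v h) b = g (Rc v h b) (f b)" if b: "b \<in> B" for b
  proof -
    have bi: "Rc (f b) v h + Rc v h (f b) + Rc h (f b) v = 0" by (rule bianchi)
    have "Rc (f b) v h = (Rc (f b) v h + Rc v h (f b) + Rc h (f b) v) - Rc v h (f b) - Rc h (f b) v" by simp
    then have "Rc (f b) v h = - Rc v h (f b) - Rc h (f b) v" unfolding bi by simp
    then have "g (Rc (f b) v h) b = - g (Rc v h (f b)) b - g (Rc h (f b) v) b" by (simp add: g_simps)
    also have "g (Rc h (f b) v) b = 0" using isoV[OF RcV[OF th0 v] bV[OF b]] .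
    also have "- g (Rc v h (f b)) b = g (f b) (Rc v h b)" using Rc_skew[of v h "f b" b] by simp
    finally show ?thesis using g_sym[of "f b" "Rc v h b"] by simp
  qed
  have comm: "(\<Sum>b\<in>B. g (nb v (nb h b)) (f b)) = (\<Sum>b\<in>B. g (nb h (nb v b)) (f b))"
  proof -
    have e1: "g (nb X (nb Y b)) (f b) = (\<Sum>c\<in>B. g (nb Y b) (f c) * g (nb X c) (f b))"
      if b: "b \<in> B" and Y: "Y \<in> V \<or> Y \<in> H" for X Y b
    proof -
      have NV: "nb Y b \<in> V" using Y nbVV[OF th0 bV[OF b]] by blast
      have "g (nb X (nb Y b)) (f b) = - g (nb Y b) (nb X (f b))" using metric[of X "nb Y b" "f b"] by simp
      also have "\<dots> = - (\<Sum>c\<in>B. g (nb Y b) (f c) * g c (nb X (f b)))" using gV_exp[OF NV, of "nb X (f b)"] by simp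
      also have "\<dots> = (\<Sum>c\<in>B. g (nb Y b) (f c) * g (nb X c) (f b))"
      proof -
        have "g c (nb X (f b)) = - g (nb X c) (f b)" for c using metric[of X c "f b"] by simp
        then show ?thesis by (simp add: sum_negf[symmetric])
      qed
      finally show ?thesis .
    qed
    have "(\<Sum>b\<in>B. g (nb v (nb h b)) (f b)) = (\<Sum>b\<in>B. \<Sum>c\<in>B. g (nb h b) (f c) * g (nb v c) (f b))"
      using e1[where X=v and Y=h] h by (intro sum.cong) auto
    also have "\<dots> = (\<Sum>c\<in>B. \<Sum>b\<in>B. g (nb h b) (f c) * g (nb v c) (f b))" by (rule sum.swap)
    also have "\<dots> = (\<Sum>b\<in>B. g (nb h (nb v b)) (f b))"
      using e1[where X=h and Y=v] v by (intro sum.cong) (auto simp: mult.commute)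
    finally show ?thesis .
  qed
  have "ricci br g v h = (\<Sum>b\<in>B. g (Rc v h b) (f b))" unfolding ricci_B using t1 t2 by simp
  also have "\<dots> = (\<Sum>b\<in>B. g (nb v (nb h b)) (f b)) - (\<Sum>b\<in>B. g (nb h (nb v b)) (f b)) - (\<Sum>b\<in>B. g (nb (br v h) b) (f b))"
    unfolding Rc_def' by (simp add: g_simps sum_subtractf)
  finally show ?thesis using comm by simp
qed

lemma goalB: "(\<And>x. \<theta> x = 0) \<Longrightarrow> card B \<ge> 1 \<Longrightarrow> ec = 0"
proof -
  assume th0: "\<And>x. \<theta> x = 0" and c: "card B \<ge> 1"
  have s1: "(\<Sum>a\<in>B. ricci br g a (f a)) = ec * m"
  proof -
    have "(\<Sum>a\<in>B. ricci br g a (f a)) = (\<Sum>a\<in>B. ec * g a (f a))" by (simp only: einst)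
    also have "\<dots> = ec * (\<Sum>a\<in>B. g a (f a))" by (simp only: sum_distrib_left)
    finally show ?thesis by (simp only: m_def')
  qed
  have r: "ricci br g a (f a) = - (\<Sum>b\<in>B. g (nb (br a (f a)) b) (f b))" if a: "a \<in> B" for a
    by (rule ric_VH[OF th0 bV[OF a] fH[OF a]])
  have "(\<Sum>a\<in>B. ricci br g a (f a)) = (\<Sum>a\<in>B. - (\<Sum>b\<in>B. g (nb (br a (f a)) b) (f b)))"
    using r by (intro sum.cong) auto
  also have "\<dots> = - (\<Sum>a\<in>B. \<Sum>b\<in>B. g (nb (br a (f a)) b) (f b))" by (rule sum_negf)
  also have "(\<Sum>a\<in>B. \<Sum>b\<in>B. g (nb (br a (f a)) b) (f b)) = (\<Sum>b\<in>B. \<Sum>a\<in>B. g (nb (br a (f a)) b) (f b))"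
    by (rule sum.swap)
  also have "\<dots> = (\<Sum>b\<in>B. g (nb xi b) (f b))" unfolding xi_def by (simp only: nb_sum_left g_sum_left)
  also have "\<dots> = 0" unfolding xi0[OF th0] by (simp add: bilinear_lzero[OF nb_bil] bilinear_lzero[OF g_bil])
  finally have "ec * m = 0" using s1 by simp
  then show ?thesis using c by simp
qed


lemma n1_br0: "card B = 1 \<Longrightarrow> br x y = 0"
proof -
  assume c1: "card B = 1"
  then obtain b where Bb: "B = {b}" by (rule card_1_singletonE)
  have ex: "z = g z (f b) *\<^sub>R b + g z b *\<^sub>R f b" for z using expX[of z] by (simp add: Bb)
  have bf: "br b (f b) = 0"
    using ex[of "br b (f b)"] abelian by metis
  have fb: "br (f b) b = 0" using bf br_anti[of "f b" b] by simp
  have "br x y = br (g x (f b) *\<^sub>R b + g x b *\<^sub>R f b) (g y (f b) *\<^sub>R b + g y b *\<^sub>R f b)"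
    using ex[of x] ex[of y] by simp
  also have "\<dots> = 0" by (simp add: br_simps br_alt bf fb)
  finally show ?thesis .
qed

end


lemma paraK_eq0:
  assumes "subspace V" "subspace H" "V \<inter> H = {0}" "v \<in> V" "h \<in> H"
  shows "paraK V H (v + h) = v - h"
  unfolding paraK_def
proof (rule the_equality)
  show "\<exists>v'\<in>V. \<exists>h'\<in>H. v + h = v' + h' \<and> v - h = v' - h'" using assms by blast
  fix y assume "\<exists>v'\<in>V. \<exists>h'\<in>H. v + h = v' + h' \<and> y = v' - h'"
  then obtain v' h' where a: "v' \<in> V" "h' \<in> H" "v + h = v' + h'" "y = v' - h'" by blast
  have "v - v' = h' - h" using a(3) by (simp add: algebra_simps)
  moreover have "v - v' \<in> V" using a assms by (simp add: subspace_diff)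
  moreover have "h' - h \<in> H" using a assms by (simp add: subspace_diff)
  ultimately have "v - v' = 0" using assms(3) by (metis IntI singletonD)
  then show "y = v - h" using a by (simp add: algebra_simps)
qed

theorem proposition8p3:
  fixes br :: "'a::euclidean_space \<Rightarrow> 'a \<Rightarrow> 'a"
    and V H :: "'a set"
    and g :: "'a \<Rightarrow> 'a \<Rightarrow> real"
  assumes "nilpotent_lie_algebra br"
    and "almost_parahermitian V H g"
    and "torsion_W4_W8 br V H g"
    and "einstein br g"
  shows "parakahler br V H g \<and> (\<forall>Y Z. ricci br g Y Z = 0)"
proof -
  from assms(1) have br_bil: "bilinear br" and br_alt: "\<And>x. br x x = 0"
    and jac: "\<And>x y z. br x (br y z) + br y (br z x) + br z (br x y) = 0"
    and nilp: "\<exists>k. lower_central br k = {0}"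
    unfolding nilpotent_lie_algebra_def lie_algebra_def by auto
  from assms(2) have subV: "subspace V" and subH: "subspace H" and VH0: "V \<inter> H = {0}"
    and VHall: "\<And>x. \<exists>v\<in>V. \<exists>h\<in>H. x = v + h" and dimVH: "dim V = dim H"
    and g_bil: "bilinear g" and g_sym: "\<And>x y. g x y = g y x"
    and g_nd: "\<And>x. (\<forall>y. g x y = 0) \<Longrightarrow> x = 0"
    and gK: "\<And>x y. g (paraK V H x) (paraK V H y) = - g x y"
    unfolding almost_parahermitian_def by auto
  from assms(3) obtain \<theta> where brV: "\<And>v w. v \<in> V \<Longrightarrow> w \<in> V \<Longrightarrow> br v w \<in> V"
    and brH: "\<And>v w. v \<in> H \<Longrightarrow> w \<in> H \<Longrightarrow> br v w \<in> H"
    and th_lin: "linear \<theta>"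
    and dF: "\<And>X Y Z. d2 br (fundamental_form V H g) X Y Z = wedge12 \<theta> (fundamental_form V H g) X Y Z"
    unfolding torsion_W4_W8_def paraK_integrable_def by blast
  from assms(4) obtain ec where einst: "\<And>Y Z. ricci br g Y Z = ec * g Y Z"
    unfolding einstein_def by blast
  have KV: "paraK V H v = v" if "v \<in> V" for v
    using paraK_eq0[OF subV subH VH0 that subspace_0[OF subH]] by simp
  have KH: "paraK V H h = - h" if "h \<in> H" for h
    using paraK_eq0[OF subV subH VH0 subspace_0[OF subV] that] by simp
  have isoV: "g v w = 0" if "v \<in> V" "w \<in> V" for v w
    using gK[of v w] KV[OF that(1)] KV[OF that(2)] by simp
  have isoH: "g v w = 0" if "v \<in> H" "w \<in> H" for v w
    using gK[of v w] KH[OF that(1)] KH[OF that(2)] bilinear_lneg[OF g_bil] bilinear_rneg[OF g_bil] by simp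
  have FV: "fundamental_form V H g x w = - g x w" if w: "w \<in> V" for x w
  proof -
    obtain p q where pq: "p \<in> V" "q \<in> H" "x = p + q" using VHall[of x] by blast
    have "fundamental_form V H g x w = g (p - q) w"
      unfolding fundamental_form_def pq(3) paraK_eq0[OF subV subH VH0 pq(1,2)] ..
    also have "\<dots> = - g (p + q) w" using isoV[OF pq(1) w] by (simp add: bilinear_lsub[OF g_bil] bilinear_ladd[OF g_bil])
    finally show ?thesis using pq(3) by simp
  qed
  have FH: "fundamental_form V H g x w = g x w" if w: "w \<in> H" for x w
  proof -
    obtain p q where pq: "p \<in> V" "q \<in> H" "x = p + q" using VHall[of x] by blast
    have "fundamental_form V H g x w = g (p - q) w"
      unfolding fundamental_form_def pq(3) paraK_eq0[OF subV subH VH0 pq(1,2)] ..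
    also have "\<dots> = g (p + q) w" using isoH[OF pq(2) w] by (simp add: bilinear_lsub[OF g_bil] bilinear_ladd[OF g_bil])
    finally show ?thesis using pq(3) by simp
  qed
  have rel1: "- g (br v w) h - g (br v h) w + g (br w h) v = \<theta> v * g w h - \<theta> w * g v h"
    if "v \<in> V" "w \<in> V" "h \<in> H" for v w h
    using dF[of v w h] FV[OF that(1)] FV[OF that(2)] FH[OF that(3)] isoV[OF that(1,2)]
    unfolding d2_def wedge12_def by simp
  have rel2: "- g (br v w) h - g (br v h) w + g (br w h) v = \<theta> v * g w h - \<theta> w * g v h"
    if "v \<in> H" "w \<in> H" "h \<in> V" for v w h
    using dF[of v w h] FV[OF that(3)] FH[OF that(1)] FH[OF that(2)] isoH[OF that(1,2)]
    unfolding d2_def wedge12_def by simp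
  have PHi: "PH br V H g \<theta> ec"
    unfolding PH_def using br_bil br_alt jac nilp subV subH VH0 VHall dimVH g_bil g_sym g_nd
      isoV isoH brV brH th_lin rel1 rel2 einst by blast
  interpret PH br V H g \<theta> ec by (rule PHi)
  obtain B f where Bf: "finite B" "B \<subseteq> V" "card B = dim V" "\<forall>b\<in>B. f b \<in> H"
    "\<forall>b\<in>B. \<forall>c\<in>B. g c (f b) = (if c = b then 1 else 0)" "\<forall>x\<in>V. x = (\<Sum>b\<in>B. g x (f b) *\<^sub>R b)"
    using dual_basis_exists by blast
  have PHBi: "PHB br V H g \<theta> ec B f"
    by (rule PHB.intro[OF PHi]) (unfold_locales, use Bf in auto)
  interpret B: PHB br V H g \<theta> ec B f by (rule PHBi)
  have dimpos: "dim V \<ge> 1"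
  proof (rule ccontr)
    assume "\<not> dim V \<ge> 1"
    then have "dim V = 0" by linarith
    then have "V \<subseteq> {0}" using dim_eq_0 by blast
    then have "x \<in> H" for x using VHall[of x] by auto
    then have "dim H = DIM('a)" by (metis dim_UNIV subsetI subset_antisym subset_UNIV)
    then show False using \<open>\<not> dim V \<ge> 1\<close> dimVH by simp
  qed
  show ?thesis
  proof (cases "card B = 1")
    case True
    have br0: "br x y = 0" for x y by (rule B.n1_br0[OF True])
    have nb0: "nb X Y = 0" for X Y by (rule br0_nb0[OF br0])
    have ric0: "ricci br g Y Z = 0" for Y Z
      unfolding ricci_def curvature_def nb0 by simp
    have "parakahler br V H g"
      unfolding parakahler_def nabla_F_def fundamental_form_def nb0
      using bilinear_lzero[OF g_bil] bilinear_rzero[OF g_bil] paraK_eq0[OF subV subH VH0 subspace_0[OF subV] subspace_0[OF subH]]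
      by simp
    then show ?thesis using ric0 by simp
  next
    case False
    then have c2: "card B \<ge> 2" using dimpos Bf(3) by simp
    have thV: "\<theta> v = 0" if "v \<in> V" for v by (rule B.goalA[OF c2 that])
    interpret S: PH br H V g \<theta> ec by (rule swap)
    obtain B' f' where Bf': "finite B'" "B' \<subseteq> H" "card B' = dim H" "\<forall>b\<in>B'. f' b \<in> V"
      "\<forall>b\<in>B'. \<forall>c\<in>B'. g c (f' b) = (if c = b then 1 else 0)" "\<forall>x\<in>H. x = (\<Sum>b\<in>B'. g x (f' b) *\<^sub>R b)"
      using S.dual_basis_exists by blast
    interpret S': PHB br H V g \<theta> ec B' f'
      by (rule PHB.intro[OF swap]) (unfold_locales, use Bf' in auto)
    have thH: "\<theta> h = 0" if "h \<in> H" for h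
      by (rule S'.goalA[OF _ that]) (use c2 Bf(3) Bf'(3) dimVH in simp)
    have th0: "\<theta> x = 0" for x
    proof -
      obtain v h where "v \<in> V" "h \<in> H" "x = v + h" using VHall[of x] by blast
      then show ?thesis using thV thH linear_add[OF th_lin] by simp
    qed
    have pk: "parakahler br V H g" unfolding parakahler_def using goalC[OF th0] by blast
    have "ec = 0" by (rule B.goalB[OF th0]) (use c2 in simp)
    then show ?thesis using pk einst by simp
  qed
qed


end
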